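(* Assume property (P$_R$) holds with constants $m_b$ and $\theta_R>0$, and $N\ge 2m_b$. Consider the semidiscrete scheme $$J a\,\ddot u=\mathbb D_{jk}(\alpha_{ijik}b)\,u+\mathrm{SAT},$$ $$\mathrm{SAT}=H^{-1}\sum_{f\in F}\big(e_f^T\,b\,D_{\hat n}\big)^T\gamma H_f\,(e_f^Tu-0)\;-\;H^{-1}\sum_{f\in F}e_f\,A\,\gamma\,H_f\,(e_f^Tu-0),$$ where on face $f$ (with its normal $\nu$) $$A=\frac1\gamma\sum_k|\nu_k|\Big(\tau_H\eta_k+\tau_R\frac{\eta_k^2}{(\eta_k)_{\min}}\Big),$$ and $\gamma, b, A$ in the face terms denote diagonal matrices of face values. If $$\tau_H\ge\frac{d}{h\,\theta_H},\qquad \tau_R\ge\frac{1}{h\,\theta_R},$$ then the scheme is stable in the following sense: the quantity $$E_D=E-\langle bD_{\hat n}u,\,u\rangle_{\Gamma',h}+\tfrac12\langle Au,\,u\rangle_{\Gamma',h}$$ satisfies $\frac{dE_D}{dt}=0$ along every solution, and $E_D\ge0$ for all $u,\dot u$.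
   Context: Summation convention: repeated subscript indices are summed from $1$ to $d$ unless "no sum" is stated. Every grid function (coefficient) is identified with the diagonal matrix of its grid values. One-dimensional SBP operators: on an equidistant grid of $N$ points with spacing $h$, let $e_\ell=(1,0,\dots,0)^T$, $e_r=(0,\dots,0,1)^T$, $H_\xi = h\,\mathrm{diag}(w_1,\dots,w_s,1,\dots,1,w_s,\dots,w_1)$ with all $w_i>0$, and $\theta_H:=w_1$. $D_\xi$ is an $N\times N$ matrix with $H_\xi D_\xi + D_\xi^T H_\xi = -e_\ell e_\ell^T + e_r e_r^T$; $\hat D_\xi$ is another $N\times N$ matrix and $\Delta D_\xi = D_\xi-\hat D_\xi$. For each grid function $c$, $D_{\xi\xi}(c)$ and $R_{\xi\xi}(c)$ are $N\times N$ matrices with $H_\xi D_{\xi\xi}(c) = -D_\xi^T H_\xi c D_\xi - R_{\xi\xi}(c) - e_\ell c_\ell e_\ell^T \hat D_\xi + e_r c_r e_r^T\hat D_\xi$ ($c_\ell,c_r$ the endpoint values of $c$), where $R_{\xi\xi}(c)$ depends linearly on $c$ and is symmetric positive semidefinite whenever $c\ge 0$ entrywise. Property (P$_R$): for all grid functions $c\ge 0$ on the one-dimensional grid and all $u$, $u^TR_{\xi\xi}(c)u\ge h\theta_R\,c_{\ell,\min}(e_\ell^T\Delta D_\xi u)^2+h\theta_R\,c_{r,\min}(e_r^T\Delta D_\xi u)^2$, where $c_{\ell,\min},c_{r,\min}$ are the minima of $c$ over the $m_b$ leftmost, resp. rightmost, grid points. Multi-dimensional operators: the reference domain $\Omega=[0,1]^d$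 carries the tensor-product grid with $N$ points and spacing $h$ in each direction. $D_i$, $\hat D_i$, $H_i$ are the Kronecker products $I\otimes\cdots\otimes X\otimes\cdots\otimes I$ with $X=D_\xi,\hat D_\xi,H_\xi$ respectively in the $i$th factor; $\Delta D_i=D_i-\hat D_i$; $H=H_\xi\otimes\cdots\otimes H_\xi$ ($d$ factors). For a grid function $c$, $D_{ii}(c)$ (resp. $\widetilde R_{ii}(c)$) applies $D_{\xi\xi}$ (resp. $R_{\xi\xi}$), with $c$ restricted to the line, along every grid line in direction $i$, and $R_{ii}(c)=H_i^{-1}H\widetilde R_{ii}(c)$. Define $\mathbb D_{jk}(c)=D_{jj}(c)$ if $j=k$ and $\mathbb D_{jk}(c)=D_j c D_k$ if $j\ne k$. Faces: $\Gamma_i^-=\{\xi_i=0\}$, $\Gamma_i^+=\{\xi_i=1\}$, $F$ the set of all $2d$ faces. For $f\in F$, $e_f$ is the restriction matrix such that $e_f^Tu$ is the vector of values of $u$ at the grid points of $f$; for $f=\Gamma_i^\pm$, $H_f$ is the Kronecker product of $d-1$ copies of $H_\xi$ (direction $i$ omitted), and $\nu=(\nu_1,\dots,\nu_d)$ is the outward unit normal of $f$ in reference coordinates ($\nu_i=\pm1$, other components $0$). Discrete forms: $\langle u,v\rangle_{\Omega,h}=u^THv$, $\langle u,v\rangle_{\Gamma,h}=\sum_{f\in F}(e_f^Tu)^TH_f(e_f^Tv)$, where in the term for face $f$ every occurrence of $\nu$ or of face-dependent quantities refers to face $f$ (also at edge and corner points); $\|u\|^2_{\Omega,h}=\langle u,u\rangle_{\Omega,h}$,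 $\|u\|^2_{\Gamma,h}=\langle u,u\rangle_{\Gamma,h}$. Geometry and coefficients: a smooth bijection $\vec x(\vec\xi)$ from $\Omega$ onto the physical domain $\Omega'$; $\mathcal J_{ij}=\partial x_j/\partial\xi_i$, $J=\det\mathcal J>0$, $\mathcal K_{ij}=\partial\xi_j/\partial x_i$; $\gamma>0$ on $\partial\Omega$ is defined by $d\Gamma'=\gamma\,d\Gamma$ (surface element ratio); $a>0$, $b>0$ are coefficient functions; all are evaluated at grid points and regarded as diagonal matrices. $\alpha_{ijkl}=\mathcal K_{ij}J\mathcal K_{kl}$. Physical forms: $\langle u,v\rangle_{\Omega',h}=\langle u,Jv\rangle_{\Omega,h}$, $\langle u,v\rangle_{\Gamma',h}=\langle u,\gamma v\rangle_{\Gamma,h}$, with associated squared (semi)norms. $D_{x_i}=\mathcal K_{ij}D_j$. The discrete normal derivative (used at boundary points, face by face) is $D_{\hat n}=\nu_j\frac{\alpha_{ijik}}{\gamma}D_k-\sum_k\nu_k\frac{\alpha_{ikik}}{\gamma}\Delta D_k$. Let $\eta_k=\alpha_{ikik}b$ (sum over $i$, no sum over $k$). At a grid point of a face $\Gamma_k^\pm$, $(\eta_k)_{\min}$ is the minimum of $\eta_k$ over the $m_b$ grid points closest to that face on the grid line in direction $k$ through that point (the term containing it is multiplied by $|\nu_k|$, so it is only needed on faces $\Gamma_k^\pm$). The discrete energy is $$E=\tfrac12\|\sqrt a\,\dot u\|^2_{\Omega',h}+\tfrac12\sum_i\|\sqrt b\,D_{x_i}u\|^2_{\Omega',h}+\tfrac12\sum_k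 u^TR_{kk}(\eta_k)u.$$ All coefficients are time-independent. *)

theory Defs
  imports "HOL-Analysis.Analysis"
begin

text \<open>One-dimensional grid: indices 0..N-1 (index 0 is the left end, N-1 the right end).
  Matrices are functions nat => nat => real, only entries with indices below N matter.
  H_xi = h diag(w), theta_H = w 0. Grid functions c are nat => real.\<close>

definition sbp_1d ::
  "nat \<Rightarrow> real \<Rightarrow> (nat \<Rightarrow> real) \<Rightarrow> nat \<Rightarrow> (nat \<Rightarrow> nat \<Rightarrow> real) \<Rightarrow> (nat \<Rightarrow> nat \<Rightarrow> real)
   \<Rightarrow> ((nat \<Rightarrow> real) \<Rightarrow> nat \<Rightarrow> nat \<Rightarrow> real) \<Rightarrow> ((nat \<Rightarrow> real) \<Rightarrow> nat \<Rightarrow> nat \<Rightarrow> real) \<Rightarrow> bool"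
where
  "sbp_1d N h w s D Dh Dxx R \<longleftrightarrow>
     \<comment> \<open>structure of the norm matrix H_xi = h diag(w_1..w_s,1,..,1,w_s..w_1)\<close>
     2 * s \<le> N \<and>
     (\<forall>i<N. 0 < w i) \<and>
     (\<forall>i<s. w (N - 1 - i) = w i) \<and>
     (\<forall>i. s \<le> i \<and> i < N - s \<longrightarrow> w i = 1) \<and>
     \<comment> \<open>SBP property H D + D^T H = - e_l e_l^T + e_r e_r^T\<close>
     (\<forall>i<N. \<forall>j<N. h * w i * D i j + D j i * (h * w j)
        = - (if i = 0 \<and> j = 0 then 1 else 0) + (if i = N - 1 \<and> j = N - 1 then 1 else 0)) \<and>
     \<comment> \<open>H D_xixi(c) = -D^T H c D - R(c) - e_l c_l e_l^T Dhat + e_r c_r e_r^T Dhat\<close>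
     (\<forall>c. \<forall>i<N. \<forall>j<N. h * w i * Dxx c i j
        = - (\<Sum>k<N. D k i * (h * w k) * c k * D k j) - R c i j
          - (if i = 0 then c 0 * Dh 0 j else 0)
          + (if i = N - 1 then c (N - 1) * Dh (N - 1) j else 0)) \<and>
     \<comment> \<open>R depends linearly on c\<close>
     (\<forall>c c' x y. \<forall>i<N. \<forall>j<N. R (\<lambda>k. x * c k + y * c' k) i j = x * R c i j + y * R c' i j) \<and>
     \<comment> \<open>R(c) symmetric positive semidefinite whenever c \<ge> 0\<close>
     (\<forall>c. (\<forall>k<N. 0 \<le> c k) \<longrightarrow>
        (\<forall>i<N. \<forall>j<N. R c i j = R c j i) \<and>
        (\<forall>u. 0 \<le> (\<Sum>i<N. \<Sum>j<N. u i * R c i j * u j)))"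

definition prop_PR ::
  "nat \<Rightarrow> real \<Rightarrow> (nat \<Rightarrow> nat \<Rightarrow> real) \<Rightarrow> (nat \<Rightarrow> nat \<Rightarrow> real)
   \<Rightarrow> ((nat \<Rightarrow> real) \<Rightarrow> nat \<Rightarrow> nat \<Rightarrow> real) \<Rightarrow> nat \<Rightarrow> real \<Rightarrow> bool"
where
  "prop_PR N h D Dh R mb thetaR \<longleftrightarrow>
     (\<forall>c u. (\<forall>k<N. 0 \<le> c k) \<longrightarrow>
        (\<Sum>i<N. \<Sum>j<N. u i * R c i j * u j)
          \<ge> h * thetaR * Min (c ` {..<mb}) * (\<Sum>j<N. (D 0 j - Dh 0 j) * u j)\<^sup>2
           + h * thetaR * Min (c ` {N - mb..<N}) * (\<Sum>j<N. (D (N - 1) j - Dh (N - 1) j) * u j)\<^sup>2)"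

text \<open>Directions are the elements of a finite type 'd, d = CARD('d).
  Grid points of [0,1]^d are functions p :: 'd => nat with p i < N.\<close>

definition grid :: "nat \<Rightarrow> ('d::finite \<Rightarrow> nat) set" where
  "grid N = {p. \<forall>i. p i < N}"

definition mv :: "nat \<Rightarrow> (('d::finite \<Rightarrow> nat) \<Rightarrow> ('d \<Rightarrow> nat) \<Rightarrow> real) \<Rightarrow> (('d \<Rightarrow> nat) \<Rightarrow> real)
                   \<Rightarrow> ('d \<Rightarrow> nat) \<Rightarrow> real" where
  "mv N M u p = (\<Sum>q\<in>grid N. M p q * u q)"

text \<open>Kronecker product I x ... x X x ... x I with X in the i-th factor.\<close>
definition kron :: "'d \<Rightarrow> (nat \<Rightarrow> nat \<Rightarrow> real) \<Rightarrow> ('d \<Rightarrow> nat) \<Rightarrow> ('d \<Rightarrow> nat) \<Rightarrow> real" where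
  "kron i X p q = (if (\<forall>k. k \<noteq> i \<longrightarrow> p k = q k) then X (p i) (q i) else 0)"

text \<open>Diagonal of H = H_xi x ... x H_xi.\<close>
definition Hfull :: "real \<Rightarrow> (nat \<Rightarrow> real) \<Rightarrow> ('d::finite \<Rightarrow> nat) \<Rightarrow> real" where
  "Hfull h w p = (\<Prod>k\<in>UNIV. h * w (p k))"

text \<open>Diagonal of the product of the H_xi over all directions except i
  (this is H_f for a face normal to direction i, and also H_i^{-1} H).\<close>
definition Hexcept :: "real \<Rightarrow> (nat \<Rightarrow> real) \<Rightarrow> 'd::finite \<Rightarrow> ('d \<Rightarrow> nat) \<Rightarrow> real" where
  "Hexcept h w i p = (\<Prod>k\<in>UNIV - {i}. h * w (p k))"

definition line_restrict :: "nat \<Rightarrow> 'd \<Rightarrow> ('d \<Rightarrow> nat) \<Rightarrow> (('d \<Rightarrow> nat) \<Rightarrow> real) \<Rightarrow> nat \<Rightarrow> real" where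
  "line_restrict N i p c = (\<lambda>j. if j < N then c (p(i := j)) else 0)"

text \<open>D_ii(c) and tilde R_ii(c): apply the 1D operator along every grid line in direction i.\<close>
definition Dii :: "nat \<Rightarrow> ((nat \<Rightarrow> real) \<Rightarrow> nat \<Rightarrow> nat \<Rightarrow> real) \<Rightarrow> 'd \<Rightarrow> (('d \<Rightarrow> nat) \<Rightarrow> real)
                    \<Rightarrow> ('d \<Rightarrow> nat) \<Rightarrow> ('d \<Rightarrow> nat) \<Rightarrow> real" where
  "Dii N Dxx i c p q =
     (if (\<forall>k. k \<noteq> i \<longrightarrow> p k = q k) then Dxx (line_restrict N i p c) (p i) (q i) else 0)"

text \<open>R_ii(c) = H_i^{-1} H tilde R_ii(c).\<close>
definition Rii :: "nat \<Rightarrow> real \<Rightarrow> (nat \<Rightarrow> real) \<Rightarrow> ((nat \<Rightarrow> real) \<Rightarrow> nat \<Rightarrow> nat \<Rightarrow> real) \<Rightarrow> 'd::finite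
                    \<Rightarrow> (('d \<Rightarrow> nat) \<Rightarrow> real) \<Rightarrow> ('d \<Rightarrow> nat) \<Rightarrow> ('d \<Rightarrow> nat) \<Rightarrow> real" where
  "Rii N h w R i c p q = Hexcept h w i p * Dii N R i c p q"

definition DD :: "nat \<Rightarrow> (nat \<Rightarrow> nat \<Rightarrow> real) \<Rightarrow> ((nat \<Rightarrow> real) \<Rightarrow> nat \<Rightarrow> nat \<Rightarrow> real) \<Rightarrow> 'd::finite \<Rightarrow> 'd
                   \<Rightarrow> (('d \<Rightarrow> nat) \<Rightarrow> real) \<Rightarrow> ('d \<Rightarrow> nat) \<Rightarrow> ('d \<Rightarrow> nat) \<Rightarrow> real" where
  "DD N D Dxx j k c p q =
     (if j = k then Dii N Dxx j c p q
      else (\<Sum>r\<in>grid N. kron j D p r * c r * kron k D r q))"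

text \<open>A face is (i, s): s = False is Gamma_i^- = {xi_i = 0}, s = True is Gamma_i^+ = {xi_i = 1}.\<close>
definition facepts :: "nat \<Rightarrow> 'd::finite \<times> bool \<Rightarrow> ('d \<Rightarrow> nat) set" where
  "facepts N f = {p \<in> grid N. p (fst f) = (if snd f then N - 1 else 0)}"

definition nu :: "'d::finite \<times> bool \<Rightarrow> real^'d" where
  "nu f = (\<chi> j. if j = fst f then (if snd f then 1 else -1) else 0)"

definition side_idx :: "nat \<Rightarrow> nat \<Rightarrow> 'd \<times> bool \<Rightarrow> nat set" where
  "side_idx N mb f = (if snd f then {N - mb..<N} else {..<mb})"

text \<open>Jm p is the Jacobian matrix (Jm p)\$i\$j = dx_j/dxi_i at the grid point p;
  J = det Jm, K = Jm^{-1} (K_ij = dxi_j/dx_i).\<close>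
definition Kmat :: "(('d::finite \<Rightarrow> nat) \<Rightarrow> real^'d^'d) \<Rightarrow> ('d \<Rightarrow> nat) \<Rightarrow> real^'d^'d" where
  "Kmat Jm p = matrix_inv (Jm p)"

definition Jdet :: "(('d::finite \<Rightarrow> nat) \<Rightarrow> real^'d^'d) \<Rightarrow> ('d \<Rightarrow> nat) \<Rightarrow> real" where
  "Jdet Jm p = det (Jm p)"

definition alpha :: "(('d::finite \<Rightarrow> nat) \<Rightarrow> real^'d^'d) \<Rightarrow> ('d \<Rightarrow> nat) \<Rightarrow> 'd \<Rightarrow> 'd \<Rightarrow> 'd \<Rightarrow> 'd \<Rightarrow> real" where
  "alpha Jm p i j k l = Kmat Jm p $ i $ j * Jdet Jm p * Kmat Jm p $ k $ l"

text \<open>Surface element ratio d Gamma' = gamma d Gamma at a point of face f (Nanson's formula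
  gamma = J |K nu|).\<close>
definition gam :: "(('d::finite \<Rightarrow> nat) \<Rightarrow> real^'d^'d) \<Rightarrow> 'd \<times> bool \<Rightarrow> ('d \<Rightarrow> nat) \<Rightarrow> real" where
  "gam Jm f p = Jdet Jm p * norm (Kmat Jm p *v nu f)"

definition eta :: "(('d::finite \<Rightarrow> nat) \<Rightarrow> real^'d^'d) \<Rightarrow> (('d \<Rightarrow> nat) \<Rightarrow> real) \<Rightarrow> 'd \<Rightarrow> ('d \<Rightarrow> nat) \<Rightarrow> real" where
  "eta Jm b k p = (\<Sum>i\<in>UNIV. alpha Jm p i k i k * b p)"

text \<open>(eta_k)_min at p on face f: minimum of eta_k over the mb grid points closest to f on the
  grid line in direction k through p (only used for k the normal direction of f).\<close>
definition etamin :: "nat \<Rightarrow> nat \<Rightarrow> (('d::finite \<Rightarrow> nat) \<Rightarrow> real^'d^'d) \<Rightarrow> (('d \<Rightarrow> nat) \<Rightarrow> real)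
                      \<Rightarrow> 'd \<times> bool \<Rightarrow> 'd \<Rightarrow> ('d \<Rightarrow> nat) \<Rightarrow> real" where
  "etamin N mb Jm b f k p = Min ((\<lambda>j. eta Jm b k (p(k := j))) ` side_idx N mb f)"

definition Apen :: "nat \<Rightarrow> nat \<Rightarrow> (('d::finite \<Rightarrow> nat) \<Rightarrow> real^'d^'d) \<Rightarrow> (('d \<Rightarrow> nat) \<Rightarrow> real)
                    \<Rightarrow> real \<Rightarrow> real \<Rightarrow> 'd \<times> bool \<Rightarrow> ('d \<Rightarrow> nat) \<Rightarrow> real" where
  "Apen N mb Jm b tauH tauR f p =
     1 / gam Jm f p * (\<Sum>k\<in>UNIV. \<bar>nu f $ k\<bar> *
        (tauH * eta Jm b k p + tauR * (eta Jm b k p)\<^sup>2 / etamin N mb Jm b f k p))"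

definition Dn :: "(nat \<Rightarrow> nat \<Rightarrow> real) \<Rightarrow> (nat \<Rightarrow> nat \<Rightarrow> real) \<Rightarrow> (('d::finite \<Rightarrow> nat) \<Rightarrow> real^'d^'d)
                  \<Rightarrow> 'd \<times> bool \<Rightarrow> ('d \<Rightarrow> nat) \<Rightarrow> ('d \<Rightarrow> nat) \<Rightarrow> real" where
  "Dn D Dh Jm f q r =
     (\<Sum>j\<in>UNIV. \<Sum>i\<in>UNIV. \<Sum>k\<in>UNIV. nu f $ j * alpha Jm q i j i k / gam Jm f q * kron k D q r)
   - (\<Sum>k\<in>UNIV. nu f $ k * (\<Sum>i\<in>UNIV. alpha Jm q i k i k) / gam Jm f q
        * kron k (\<lambda>x y. D x y - Dh x y) q r)"

definition Dx :: "nat \<Rightarrow> (nat \<Rightarrow> nat \<Rightarrow> real) \<Rightarrow> (('d::finite \<Rightarrow> nat) \<Rightarrow> real^'d^'d) \<Rightarrow> 'd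
                  \<Rightarrow> (('d \<Rightarrow> nat) \<Rightarrow> real) \<Rightarrow> ('d \<Rightarrow> nat) \<Rightarrow> real" where
  "Dx N D Jm i u p = (\<Sum>j\<in>UNIV. Kmat Jm p $ i $ j * mv N (kron j D) u p)"

definition ip_vol :: "nat \<Rightarrow> real \<Rightarrow> (nat \<Rightarrow> real) \<Rightarrow> (('d::finite \<Rightarrow> nat) \<Rightarrow> real^'d^'d)
                      \<Rightarrow> (('d \<Rightarrow> nat) \<Rightarrow> real) \<Rightarrow> (('d \<Rightarrow> nat) \<Rightarrow> real) \<Rightarrow> real" where
  "ip_vol N h w Jm u v = (\<Sum>p\<in>grid N. u p * Hfull h w p * (Jdet Jm p * v p))"

text \<open>Physical boundary form <u,v>_{Gamma',h} = <u, gamma v>_{Gamma,h}; the face-dependent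
  quantities u f, v f are evaluated for face f in the term for f.\<close>
definition ip_bdry :: "nat \<Rightarrow> real \<Rightarrow> (nat \<Rightarrow> real) \<Rightarrow> (('d::finite \<Rightarrow> nat) \<Rightarrow> real^'d^'d)
                       \<Rightarrow> ('d \<times> bool \<Rightarrow> ('d \<Rightarrow> nat) \<Rightarrow> real) \<Rightarrow> ('d \<times> bool \<Rightarrow> ('d \<Rightarrow> nat) \<Rightarrow> real) \<Rightarrow> real" where
  "ip_bdry N h w Jm u v =
     (\<Sum>f\<in>UNIV. \<Sum>p\<in>facepts N f. u f p * Hexcept h w (fst f) p * (gam Jm f p * v f p))"

definition energy :: "nat \<Rightarrow> real \<Rightarrow> (nat \<Rightarrow> real) \<Rightarrow> (nat \<Rightarrow> nat \<Rightarrow> real)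
                      \<Rightarrow> ((nat \<Rightarrow> real) \<Rightarrow> nat \<Rightarrow> nat \<Rightarrow> real) \<Rightarrow> (('d::finite \<Rightarrow> nat) \<Rightarrow> real^'d^'d)
                      \<Rightarrow> (('d \<Rightarrow> nat) \<Rightarrow> real) \<Rightarrow> (('d \<Rightarrow> nat) \<Rightarrow> real)
                      \<Rightarrow> (('d \<Rightarrow> nat) \<Rightarrow> real) \<Rightarrow> (('d \<Rightarrow> nat) \<Rightarrow> real) \<Rightarrow> real" where
  "energy N h w D R Jm a b u ud =
     1/2 * ip_vol N h w Jm (\<lambda>p. sqrt (a p) * ud p) (\<lambda>p. sqrt (a p) * ud p)
   + 1/2 * (\<Sum>i\<in>UNIV. ip_vol N h w Jm (\<lambda>p. sqrt (b p) * Dx N D Jm i u p)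
                                       (\<lambda>p. sqrt (b p) * Dx N D Jm i u p))
   + 1/2 * (\<Sum>k\<in>UNIV. \<Sum>p\<in>grid N. \<Sum>q\<in>grid N. u p * Rii N h w R k (eta Jm b k) p q * u q)"

definition energy_D :: "nat \<Rightarrow> real \<Rightarrow> (nat \<Rightarrow> real) \<Rightarrow> (nat \<Rightarrow> nat \<Rightarrow> real) \<Rightarrow> (nat \<Rightarrow> nat \<Rightarrow> real)
                      \<Rightarrow> ((nat \<Rightarrow> real) \<Rightarrow> nat \<Rightarrow> nat \<Rightarrow> real) \<Rightarrow> nat \<Rightarrow> (('d::finite \<Rightarrow> nat) \<Rightarrow> real^'d^'d)
                      \<Rightarrow> (('d \<Rightarrow> nat) \<Rightarrow> real) \<Rightarrow> (('d \<Rightarrow> nat) \<Rightarrow> real) \<Rightarrow> real \<Rightarrow> real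
                      \<Rightarrow> (('d \<Rightarrow> nat) \<Rightarrow> real) \<Rightarrow> (('d \<Rightarrow> nat) \<Rightarrow> real) \<Rightarrow> real" where
  "energy_D N h w D Dh R mb Jm a b tauH tauR u ud =
     energy N h w D R Jm a b u ud
   - ip_bdry N h w Jm (\<lambda>f p. b p * mv N (Dn D Dh Jm f) u p) (\<lambda>f p. u p)
   + 1/2 * ip_bdry N h w Jm (\<lambda>f p. Apen N mb Jm b tauH tauR f p * u p) (\<lambda>f p. u p)"

definition SAT :: "nat \<Rightarrow> real \<Rightarrow> (nat \<Rightarrow> real) \<Rightarrow> (nat \<Rightarrow> nat \<Rightarrow> real) \<Rightarrow> (nat \<Rightarrow> nat \<Rightarrow> real)
                   \<Rightarrow> nat \<Rightarrow> (('d::finite \<Rightarrow> nat) \<Rightarrow> real^'d^'d) \<Rightarrow> (('d \<Rightarrow> nat) \<Rightarrow> real)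
                   \<Rightarrow> real \<Rightarrow> real \<Rightarrow> (('d \<Rightarrow> nat) \<Rightarrow> real) \<Rightarrow> ('d \<Rightarrow> nat) \<Rightarrow> real" where
  "SAT N h w D Dh mb Jm b tauH tauR u p =
     1 / Hfull h w p * (\<Sum>f\<in>UNIV. \<Sum>q\<in>facepts N f.
        (b q * Dn D Dh Jm f q p) * gam Jm f q * Hexcept h w (fst f) q * (u q - 0))
   - 1 / Hfull h w p * (\<Sum>f\<in>UNIV. if p \<in> facepts N f then
        Apen N mb Jm b tauH tauR f p * gam Jm f p * Hexcept h w (fst f) p * (u p - 0) else 0)"

definition rhs :: "nat \<Rightarrow> real \<Rightarrow> (nat \<Rightarrow> real) \<Rightarrow> (nat \<Rightarrow> nat \<Rightarrow> real) \<Rightarrow> (nat \<Rightarrow> nat \<Rightarrow> real)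
                   \<Rightarrow> ((nat \<Rightarrow> real) \<Rightarrow> nat \<Rightarrow> nat \<Rightarrow> real) \<Rightarrow> nat \<Rightarrow> (('d::finite \<Rightarrow> nat) \<Rightarrow> real^'d^'d)
                   \<Rightarrow> (('d \<Rightarrow> nat) \<Rightarrow> real) \<Rightarrow> real \<Rightarrow> real \<Rightarrow> (('d \<Rightarrow> nat) \<Rightarrow> real) \<Rightarrow> ('d \<Rightarrow> nat) \<Rightarrow> real" where
  "rhs N h w D Dh Dxx mb Jm b tauH tauR u p =
     (\<Sum>j\<in>UNIV. \<Sum>k\<in>UNIV. mv N (DD N D Dxx j k (\<lambda>q. \<Sum>i\<in>UNIV. alpha Jm q i j i k * b q)) u p)
   + SAT N h w D Dh mb Jm b tauH tauR u p"

end

theory Submission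
  imports Defs
begin


lemma grid_upd: "p \<in> grid N \<Longrightarrow> m < N \<Longrightarrow> p(j:=m) \<in> grid N"
  by (auto simp: grid_def)

lemma line_sum:
  assumes p: "p \<in> grid N"
  shows "(\<Sum>q\<in>grid N. if (\<forall>k. k \<noteq> j \<longrightarrow> p k = q k) then g q else 0) = (\<Sum>m<N. g (p(j:=m)))"
proof -
  have fin: "finite (grid N :: ('d::finite \<Rightarrow> nat) set)"
  proof -
    have "grid N \<subseteq> Pi\<^sub>E UNIV (\<lambda>_. {..<N})" by (auto simp: grid_def PiE_def extensional_def)
    thus ?thesis by (rule finite_subset) (simp add: finite_PiE)
  qed
  have "(\<Sum>q\<in>grid N. if (\<forall>k. k \<noteq> j \<longrightarrow> p k = q k) then g q else 0)
      = (\<Sum>q\<in>{q\<in>grid N. \<forall>k. k \<noteq> j \<longrightarrow> p k = q k}. g q)"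
    using fin by (rule sum.inter_filter[symmetric])
  also have "{q\<in>grid N. \<forall>k. k \<noteq> j \<longrightarrow> p k = q k} = (\<lambda>m. p(j:=m)) ` {..<N}"
  proof safe
    fix q assume q: "q \<in> grid N" "\<forall>k. k \<noteq> j \<longrightarrow> p k = q k"
    then have "q = p(j := q j)" by (auto simp: fun_eq_iff)
    moreover have "q j < N" using q by (auto simp: grid_def)
    ultimately show "q \<in> (\<lambda>m. p(j:=m)) ` {..<N}" by blast
  qed (use p in \<open>auto simp: grid_def\<close>)
  also have "(\<Sum>q\<in>(\<lambda>m. p(j:=m)) ` {..<N}. g q) = (\<Sum>m<N. g (p(j:=m)))"
    by (rule sum.reindex_cong[where l="\<lambda>m. p(j:=m)"]) (auto simp: inj_on_def fun_eq_iff)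
  finally show ?thesis .
qed

lemma finite_grid: "finite (grid N :: ('d::finite \<Rightarrow> nat) set)"
proof -
  have "grid N \<subseteq> Pi\<^sub>E UNIV (\<lambda>_. {..<N})" by (auto simp: grid_def PiE_def extensional_def)
  thus ?thesis by (rule finite_subset) (simp add: finite_PiE)
qed

lemma Hfull_split: "Hfull h w p = h * w (p j) * Hexcept h w j p"
  unfolding Hfull_def Hexcept_def
  by (subst prod.remove[of UNIV j]) auto

lemma Hexcept_line: "(\<forall>k. k \<noteq> j \<longrightarrow> p k = q k) \<Longrightarrow> Hexcept h w j p = Hexcept h w j q"
  unfolding Hexcept_def by (intro prod.cong) auto

lemma Hexcept_upd: "Hexcept h w j (p(j:=m)) = Hexcept h w j p"
  by (rule Hexcept_line) auto

lemma mv_kron: "p \<in> grid N \<Longrightarrow> mv N (kron j X) u p = (\<Sum>m<N. X (p j) m * u (p(j:=m)))"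
proof -
  assume p: "p \<in> grid N"
  have "mv N (kron j X) u p = (\<Sum>q\<in>grid N. if (\<forall>k. k \<noteq> j \<longrightarrow> p k = q k) then X (p j) (q j) * u q else 0)"
    unfolding mv_def kron_def by (intro sum.cong) auto
  also have "\<dots> = (\<Sum>m<N. X (p j) m * u (p(j:=m)))"
    using line_sum[OF p, of j "\<lambda>q. X (p j) (q j) * u q"] by simp
  finally show ?thesis .
qed


definition BT :: "nat \<Rightarrow> real \<Rightarrow> (nat \<Rightarrow> real) \<Rightarrow> 'd::finite \<Rightarrow> ('d \<Rightarrow> nat) \<Rightarrow> real" where
  "BT N h w j p = Hexcept h w j p * ((if p j = N - 1 then 1 else 0) - (if p j = 0 then 1 else 0))"

declare finite_grid[simp]

locale setting =
  fixes N s mb :: nat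
    and h thetaR tauH tauR :: real
    and w :: "nat \<Rightarrow> real"
    and D Dh :: "nat \<Rightarrow> nat \<Rightarrow> real"
    and Dxx R :: "(nat \<Rightarrow> real) \<Rightarrow> nat \<Rightarrow> nat \<Rightarrow> real"
  assumes sbp: "sbp_1d N h w s D Dh Dxx R"
    and PR: "prop_PR N h D Dh R mb thetaR"
    and thetaR_pos: "0 < thetaR"
    and mb_pos: "1 \<le> mb"
    and N_mb: "N \<ge> 2 * mb"
    and h_def: "h = 1 / (real N - 1)"
begin

lemma N2: "N \<ge> 2" using mb_pos N_mb by linarith
lemma h_pos: "h > 0" using N2 h_def by auto
lemma w_pos: "i < N \<Longrightarrow> w i > 0" using sbp unfolding sbp_1d_def by blast
lemma w_end: "w (N - 1) = w 0"
proof (cases "s = 0")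
  case True
  then have "w i = 1" if "i < N" for i using sbp that unfolding sbp_1d_def by auto
  then show ?thesis using N2 by simp
next
  case False
  then show ?thesis using sbp unfolding sbp_1d_def by auto
qed
lemma sbp1: "i < N \<Longrightarrow> j < N \<Longrightarrow> h * w i * D i j + D j i * (h * w j)
        = - (if i = 0 \<and> j = 0 then 1 else 0) + (if i = N - 1 \<and> j = N - 1 then 1 else 0)"
  using sbp unfolding sbp_1d_def by blast
lemma sbpxx: "i < N \<Longrightarrow> j < N \<Longrightarrow> h * w i * Dxx c i j
        = - (\<Sum>k<N. D k i * (h * w k) * c k * D k j) - R c i j
          - (if i = 0 then c 0 * Dh 0 j else 0)
          + (if i = N - 1 then c (N - 1) * Dh (N - 1) j else 0)"
  using sbp unfolding sbp_1d_def by blast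
lemma R_sym: "(\<forall>k<N. 0 \<le> c k) \<Longrightarrow> i < N \<Longrightarrow> j < N \<Longrightarrow> R c i j = R c j i"
  using sbp unfolding sbp_1d_def by blast

lemma Hexcept_pos: "p \<in> grid N \<Longrightarrow> Hexcept h w j p > 0"
  unfolding Hexcept_def using h_pos w_pos by (intro prod_pos) (auto simp: grid_def)
lemma Hfull_pos: "p \<in> grid N \<Longrightarrow> Hfull h w p > 0"
  unfolding Hfull_def using h_pos w_pos by (intro prod_pos) (auto simp: grid_def)

lemma K1:
  assumes p: "p \<in> grid N" and q: "q \<in> grid N"
  shows "Hfull h w p * kron j D p q + kron j D q p * Hfull h w q = (if p = q then BT N h w j p else 0)"
proof (cases "\<forall>k. k \<noteq> j \<longrightarrow> p k = q k")
  case False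
  then have "p \<noteq> q" by auto
  moreover have "\<not> (\<forall>k. k \<noteq> j \<longrightarrow> q k = p k)" using False by auto
  ultimately show ?thesis using False unfolding kron_def by auto
next
  case True
  have pj: "p j < N" and qj: "q j < N" using p q by (auto simp: grid_def)
  have eq: "p = q \<longleftrightarrow> p j = q j" using True by (auto simp: fun_eq_iff)
  have He: "Hexcept h w j q = Hexcept h w j p" using True by (intro Hexcept_line[symmetric]) auto
  have T2: "\<forall>k. k \<noteq> j \<longrightarrow> q k = p k" using True by auto
  have "Hfull h w p * kron j D p q + kron j D q p * Hfull h w q
      = Hexcept h w j p * (h * w (p j) * D (p j) (q j) + D (q j) (p j) * (h * w (q j)))"
    unfolding kron_def using True T2 He
    by (simp add: Hfull_split[of h w p j] Hfull_split[of h w q j] algebra_simps)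
  also have "\<dots> = Hexcept h w j p * (- (if p j = 0 \<and> q j = 0 then 1 else 0) + (if p j = N - 1 \<and> q j = N - 1 then 1 else 0))"
    using sbp1[OF pj qj] by simp
  also have "\<dots> = (if p = q then BT N h w j p else 0)"
    unfolding eq BT_def by auto
  finally show ?thesis .
qed

lemma T1:
  fixes z :: "'d::finite \<Rightarrow> nat" and v :: "('d \<Rightarrow> nat) \<Rightarrow> real"
  assumes z: "z \<in> grid N"
  shows "(\<Sum>r\<in>grid N. v r * Hfull h w r * kron j D r z) = - Hfull h w z * mv N (kron j D) v z + BT N h w j z * v z"
proof -
  have "(\<Sum>r\<in>grid N. v r * Hfull h w r * kron j D r z)
      = (\<Sum>r\<in>grid N. - Hfull h w z * (kron j D z r * v r) + (if r = z then BT N h w j z * v z else 0))"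
  proof (intro sum.cong refl)
    fix r :: "'d \<Rightarrow> nat" assume r: "r \<in> grid N"
    show "v r * Hfull h w r * kron j D r z = - Hfull h w z * (kron j D z r * v r) + (if r = z then BT N h w j z * v z else 0)"
    proof -
      have e: "Hfull h w r * kron j D r z = - (kron j D z r * Hfull h w z) + (if r = z then BT N h w j r else 0)"
        using K1[OF r z, of j] by linarith
      have "v r * Hfull h w r * kron j D r z = v r * (Hfull h w r * kron j D r z)" by simp
      also have "\<dots> = v r * (- (kron j D z r * Hfull h w z) + (if r = z then BT N h w j r else 0))"
        by (simp only: e)
      also have "\<dots> = - Hfull h w z * (kron j D z r * v r) + (if r = z then BT N h w j z * v z else 0)"
        by (auto simp: algebra_simps)
      finally show ?thesis .
    qed
  qed
  also have "\<dots> = - Hfull h w z * mv N (kron j D) v z + BT N h w j z * v z"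
    using z by (simp add: sum_subtractf mv_def sum_distrib_left sum_negf sum.delta sum.delta')
  finally show ?thesis .
qed

end


context setting begin

lemma T2a:
  fixes r :: "'d::finite \<Rightarrow> nat" and u c :: "('d \<Rightarrow> nat) \<Rightarrow> real"
  assumes r: "r \<in> grid N"
  shows "Hfull h w r * mv N (Dii N Dxx j c) u r =
     - Hexcept h w j r * (\<Sum>m<N. D m (r j) * (h * w m) * c (r(j:=m)) * mv N (kron j D) u (r(j:=m)))
     - (\<Sum>q\<in>grid N. Rii N h w R j c r q * u q)
     + BT N h w j r * c r * mv N (kron j Dh) u r"
proof -
  let ?lc = "line_restrict N j r c"
  let ?E = "Hexcept h w j r"
  have rj: "r j < N" using r by (auto simp: grid_def)
  have lc: "m < N \<Longrightarrow> ?lc m = c (r(j:=m))" for m by (simp add: line_restrict_def)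
  have "Hfull h w r * mv N (Dii N Dxx j c) u r
      = (\<Sum>q\<in>grid N. if (\<forall>k. k \<noteq> j \<longrightarrow> r k = q k) then h * w (r j) * Dxx ?lc (r j) (q j) * ?E * u q else 0)"
    unfolding mv_def Dii_def sum_distrib_left
    by (intro sum.cong refl) (auto simp: Hfull_split[of h w r j] algebra_simps)
  also have "\<dots> = (\<Sum>m<N. h * w (r j) * Dxx ?lc (r j) m * ?E * u (r(j:=m)))"
    using line_sum[OF r, of j "\<lambda>q. h * w (r j) * Dxx ?lc (r j) (q j) * ?E * u q"] by simp
  also have "\<dots> = (\<Sum>m'<N. ?E * u (r(j:=m')) * (
        - (\<Sum>m<N. D m (r j) * (h * w m) * ?lc m * D m m') - R ?lc (r j) m'
          - (if r j = 0 then ?lc 0 * Dh 0 m' else 0)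
          + (if r j = N - 1 then ?lc (N - 1) * Dh (N - 1) m' else 0)))"
  proof (intro sum.cong refl)
    fix m' assume "m' \<in> {..<N}"
    hence m': "m' < N" by simp
    have e: "h * w (r j) * Dxx ?lc (r j) m' = - (\<Sum>m<N. D m (r j) * (h * w m) * ?lc m * D m m') - R ?lc (r j) m'
          - (if r j = 0 then ?lc 0 * Dh 0 m' else 0)
          + (if r j = N - 1 then ?lc (N - 1) * Dh (N - 1) m' else 0)"
      by (rule sbpxx[OF rj m'])
    show "h * w (r j) * Dxx ?lc (r j) m' * ?E * u (r(j:=m')) = ?E * u (r(j:=m')) * (
        - (\<Sum>m<N. D m (r j) * (h * w m) * ?lc m * D m m') - R ?lc (r j) m'
          - (if r j = 0 then ?lc 0 * Dh 0 m' else 0)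
          + (if r j = N - 1 then ?lc (N - 1) * Dh (N - 1) m' else 0))"
      by (simp only: e) (simp only: mult_ac)
  qed
  also have "\<dots> = - ?E * (\<Sum>m<N. D m (r j) * (h * w m) * ?lc m * (\<Sum>m'<N. D m m' * u (r(j:=m'))))
        - (\<Sum>m'<N. ?E * R ?lc (r j) m' * u (r(j:=m')))
        + ?E * ((if r j = N - 1 then 1 else 0) - (if r j = 0 then 1 else 0)) * c r * (\<Sum>m'<N. Dh (r j) m' * u (r(j:=m')))"
  proof -
    have e1: "(\<Sum>m'<N. ?E * u (r(j:=m')) * (\<Sum>m<N. D m (r j) * (h * w m) * ?lc m * D m m'))
      = ?E * (\<Sum>m<N. D m (r j) * (h * w m) * ?lc m * (\<Sum>m'<N. D m m' * u (r(j:=m'))))"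
    proof -
      have "(\<Sum>m'<N. ?E * u (r(j:=m')) * (\<Sum>m<N. D m (r j) * (h * w m) * ?lc m * D m m'))
          = (\<Sum>m'<N. \<Sum>m<N. ?E * (D m (r j) * (h * w m) * ?lc m * (D m m' * u (r(j:=m')))))"
        by (simp add: sum_distrib_left mult_ac)
      also have "\<dots> = (\<Sum>m<N. \<Sum>m'<N. ?E * (D m (r j) * (h * w m) * ?lc m * (D m m' * u (r(j:=m')))))"
        by (rule sum.swap)
      also have "\<dots> = ?E * (\<Sum>m<N. D m (r j) * (h * w m) * ?lc m * (\<Sum>m'<N. D m m' * u (r(j:=m'))))"
        by (simp add: sum_distrib_left)
      finally show ?thesis .
    qed
    have rr: "r(j := r j) = r" by simp
    have e3: "(\<Sum>m'<N. ?E * u (r(j:=m')) * ((if r j = N - 1 then ?lc (N - 1) * Dh (N - 1) m' else 0)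
          - (if r j = 0 then ?lc 0 * Dh 0 m' else 0)))
       = ?E * ((if r j = N - 1 then 1 else 0) - (if r j = 0 then 1 else 0)) * c r * (\<Sum>m'<N. Dh (r j) m' * u (r(j:=m')))"
    proof (cases "r j = 0")
      case True
      then have "r j \<noteq> N - 1" using N2 by auto
      then show ?thesis using True lc[of 0] N2 rr
        by (simp add: sum_distrib_left sum_negf algebra_simps)
    next
      case False
      show ?thesis
      proof (cases "r j = N - 1")
        case True
        then show ?thesis using False lc[of "N - 1"] N2 rr
          by (simp add: sum_distrib_left algebra_simps)
      qed (use False in simp)
    qed
    show ?thesis
      using e1 e3 by (simp add: algebra_simps sum.distrib sum_subtractf sum_negf)
  qed
  also have "\<dots> = - ?E * (\<Sum>m<N. D m (r j) * (h * w m) * c (r(j:=m)) * mv N (kron j D) u (r(j:=m)))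
     - (\<Sum>q\<in>grid N. Rii N h w R j c r q * u q)
     + BT N h w j r * c r * mv N (kron j Dh) u r"
  proof -
    have a1: "(\<Sum>m<N. D m (r j) * (h * w m) * ?lc m * (\<Sum>m'<N. D m m' * u (r(j:=m'))))
        = (\<Sum>m<N. D m (r j) * (h * w m) * c (r(j:=m)) * mv N (kron j D) u (r(j:=m)))"
      by (intro sum.cong refl) (simp add: lc mv_kron[OF grid_upd[OF r]])
    have a2: "(\<Sum>m'<N. ?E * R ?lc (r j) m' * u (r(j:=m'))) = (\<Sum>q\<in>grid N. Rii N h w R j c r q * u q)"
    proof -
      have "(\<Sum>q\<in>grid N. Rii N h w R j c r q * u q)
          = (\<Sum>q\<in>grid N. if (\<forall>k. k \<noteq> j \<longrightarrow> r k = q k) then ?E * R ?lc (r j) (q j) * u q else 0)"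
        unfolding Rii_def Dii_def by (intro sum.cong refl) auto
      also have "\<dots> = (\<Sum>m'<N. ?E * R ?lc (r j) m' * u (r(j:=m')))"
        using line_sum[OF r, of j "\<lambda>q. ?E * R ?lc (r j) (q j) * u q"] by simp
      finally show ?thesis by simp
    qed
    have a3: "mv N (kron j Dh) u r = (\<Sum>m'<N. Dh (r j) m' * u (r(j:=m')))"
      by (rule mv_kron[OF r])
    show ?thesis unfolding a1 a2 a3 BT_def by (simp add: algebra_simps)
  qed
  finally show ?thesis .
qed

lemma T2b:
  fixes u v c :: "('d::finite \<Rightarrow> nat) \<Rightarrow> real"
  shows "(\<Sum>r\<in>grid N. v r * Hexcept h w j r * (\<Sum>m<N. D m (r j) * (h * w m) * c (r(j:=m)) * mv N (kron j D) u (r(j:=m))))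
       = (\<Sum>z\<in>grid N. Hfull h w z * c z * mv N (kron j D) u z * mv N (kron j D) v z)"
proof -
  define g where "g r z = v r * Hexcept h w j r * (D (z j) (r j) * (h * w (z j)) * c z * mv N (kron j D) u z)"
    for r z :: "'d \<Rightarrow> nat"
  have "(\<Sum>r\<in>grid N. v r * Hexcept h w j r * (\<Sum>m<N. D m (r j) * (h * w m) * c (r(j:=m)) * mv N (kron j D) u (r(j:=m))))
      = (\<Sum>r\<in>grid N. \<Sum>z\<in>grid N. if (\<forall>k. k \<noteq> j \<longrightarrow> r k = z k) then g r z else 0)"
  proof (intro sum.cong refl)
    fix r :: "'d \<Rightarrow> nat" assume r: "r \<in> grid N"
    show "v r * Hexcept h w j r * (\<Sum>m<N. D m (r j) * (h * w m) * c (r(j:=m)) * mv N (kron j D) u (r(j:=m)))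
        = (\<Sum>z\<in>grid N. if (\<forall>k. k \<noteq> j \<longrightarrow> r k = z k) then g r z else 0)"
      unfolding line_sum[OF r] g_def by (simp add: sum_distrib_left)
  qed
  also have "\<dots> = (\<Sum>z\<in>grid N. \<Sum>r\<in>grid N. if (\<forall>k. k \<noteq> j \<longrightarrow> r k = z k) then g r z else 0)"
    by (rule sum.swap)
  also have "\<dots> = (\<Sum>z\<in>grid N. Hfull h w z * c z * mv N (kron j D) u z * mv N (kron j D) v z)"
  proof (intro sum.cong refl)
    fix z :: "'d \<Rightarrow> nat" assume z: "z \<in> grid N"
    have "(\<Sum>r\<in>grid N. if (\<forall>k. k \<noteq> j \<longrightarrow> r k = z k) then g r z else 0)
        = (\<Sum>r\<in>grid N. Hfull h w z * c z * mv N (kron j D) u z * (kron j D z r * v r))"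
    proof (intro sum.cong refl)
      fix r :: "'d \<Rightarrow> nat"
      show "(if (\<forall>k. k \<noteq> j \<longrightarrow> r k = z k) then g r z else 0) = Hfull h w z * c z * mv N (kron j D) u z * (kron j D z r * v r)"
      proof (cases "\<forall>k. k \<noteq> j \<longrightarrow> r k = z k")
        case True
        then have "Hexcept h w j r = Hexcept h w j z" by (rule Hexcept_line)
        moreover have "\<forall>k. k \<noteq> j \<longrightarrow> z k = r k" using True by auto
        ultimately show ?thesis using True unfolding g_def kron_def[of j D z r] Hfull_split[of h w z j] by (simp add: mult_ac)
      next
        case False
        have F2: "\<not> (\<forall>k. k \<noteq> j \<longrightarrow> z k = r k)" using False by auto
        show ?thesis unfolding kron_def[of j D z r] by (simp only: if_not_P[OF False] if_not_P[OF F2] mult_zero_left mult_zero_right)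
      qed
    qed
    also have "\<dots> = Hfull h w z * c z * mv N (kron j D) u z * mv N (kron j D) v z"
      unfolding mv_def by (simp add: sum_distrib_left)
    finally show "(\<Sum>r\<in>grid N. if (\<forall>k. k \<noteq> j \<longrightarrow> r k = z k) then g r z else 0) = Hfull h w z * c z * mv N (kron j D) u z * mv N (kron j D) v z" .
  qed
  finally show ?thesis .
qed

lemma T2:
  fixes u v c :: "('d::finite \<Rightarrow> nat) \<Rightarrow> real"
  shows "(\<Sum>r\<in>grid N. v r * Hfull h w r * mv N (Dii N Dxx j c) u r)
    = - (\<Sum>z\<in>grid N. Hfull h w z * c z * mv N (kron j D) u z * mv N (kron j D) v z)
      - (\<Sum>r\<in>grid N. \<Sum>q\<in>grid N. v r * Rii N h w R j c r q * u q)
      + (\<Sum>r\<in>grid N. BT N h w j r * v r * c r * mv N (kron j Dh) u r)"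
proof -
  have "(\<Sum>r\<in>grid N. v r * Hfull h w r * mv N (Dii N Dxx j c) u r)
     = (\<Sum>r\<in>grid N. - (v r * Hexcept h w j r * (\<Sum>m<N. D m (r j) * (h * w m) * c (r(j:=m)) * mv N (kron j D) u (r(j:=m))))
        - (\<Sum>q\<in>grid N. v r * Rii N h w R j c r q * u q) + BT N h w j r * v r * c r * mv N (kron j Dh) u r)"
  proof (intro sum.cong refl)
    fix r :: "'d \<Rightarrow> nat" assume r: "r \<in> grid N"
    have "v r * Hfull h w r * mv N (Dii N Dxx j c) u r = v r * (Hfull h w r * mv N (Dii N Dxx j c) u r)" by simp
    also have "\<dots> = v r * (- Hexcept h w j r * (\<Sum>m<N. D m (r j) * (h * w m) * c (r(j:=m)) * mv N (kron j D) u (r(j:=m)))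
     - (\<Sum>q\<in>grid N. Rii N h w R j c r q * u q)
     + BT N h w j r * c r * mv N (kron j Dh) u r)" by (simp only: T2a[OF r])
    also have "\<dots> = - (v r * Hexcept h w j r * (\<Sum>m<N. D m (r j) * (h * w m) * c (r(j:=m)) * mv N (kron j D) u (r(j:=m))))
        - (\<Sum>q\<in>grid N. v r * Rii N h w R j c r q * u q) + BT N h w j r * v r * c r * mv N (kron j Dh) u r"
      by (simp add: algebra_simps sum_distrib_left sum_negf)
    finally show "v r * Hfull h w r * mv N (Dii N Dxx j c) u r = - (v r * Hexcept h w j r * (\<Sum>m<N. D m (r j) * (h * w m) * c (r(j:=m)) * mv N (kron j D) u (r(j:=m))))
        - (\<Sum>q\<in>grid N. v r * Rii N h w R j c r q * u q) + BT N h w j r * v r * c r * mv N (kron j Dh) u r" .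
  qed
  also have "\<dots> = - (\<Sum>r\<in>grid N. v r * Hexcept h w j r * (\<Sum>m<N. D m (r j) * (h * w m) * c (r(j:=m)) * mv N (kron j D) u (r(j:=m))))
      - (\<Sum>r\<in>grid N. \<Sum>q\<in>grid N. v r * Rii N h w R j c r q * u q)
      + (\<Sum>r\<in>grid N. BT N h w j r * v r * c r * mv N (kron j Dh) u r)"
    by (simp add: sum.distrib sum_subtractf sum_negf)
  also have "\<dots> = - (\<Sum>z\<in>grid N. Hfull h w z * c z * mv N (kron j D) u z * mv N (kron j D) v z)
      - (\<Sum>r\<in>grid N. \<Sum>q\<in>grid N. v r * Rii N h w R j c r q * u q)
      + (\<Sum>r\<in>grid N. BT N h w j r * v r * c r * mv N (kron j Dh) u r)"
    by (simp only: T2b)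
  finally show ?thesis .
qed

end


definition cf :: "(('d::finite \<Rightarrow> nat) \<Rightarrow> real^'d^'d) \<Rightarrow> (('d \<Rightarrow> nat) \<Rightarrow> real) \<Rightarrow> 'd \<Rightarrow> 'd \<Rightarrow> ('d \<Rightarrow> nat) \<Rightarrow> real" where
  "cf Jm b j k p = (\<Sum>i\<in>UNIV. alpha Jm p i j i k * b p)"

lemma eta_cf: "eta Jm b k = cf Jm b k k"
  by (simp add: fun_eq_iff eta_def cf_def)

lemma cf_sym: "cf Jm b j k p = cf Jm b k j p"
  unfolding cf_def alpha_def by (simp add: mult_ac)

lemma face_sum:
  fixes G :: "'d::finite \<times> bool \<Rightarrow> ('d \<Rightarrow> nat) \<Rightarrow> real"
  shows "(\<Sum>f\<in>UNIV. \<Sum>p\<in>facepts N f. G f p)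
    = (\<Sum>j\<in>UNIV. \<Sum>p\<in>grid N. (if p j = N - 1 then G (j, True) p else 0) + (if p j = 0 then G (j, False) p else 0))"
proof -
  have "(\<Sum>f\<in>UNIV. \<Sum>p\<in>facepts N f. G f p) = (\<Sum>j\<in>UNIV. \<Sum>s\<in>UNIV. \<Sum>p\<in>facepts N (j, s). G (j, s) p)"
    by (simp add: UNIV_Times_UNIV[symmetric] sum.cartesian_product del: UNIV_Times_UNIV)
  also have "\<dots> = (\<Sum>j\<in>UNIV. \<Sum>p\<in>facepts N (j, True). G (j, True) p) + (\<Sum>j\<in>UNIV. \<Sum>p\<in>facepts N (j, False). G (j, False) p)"
    by (simp add: UNIV_bool sum.distrib)
  also have "\<dots> = (\<Sum>j\<in>UNIV. \<Sum>p\<in>grid N. (if p j = N - 1 then G (j, True) p else 0) + (if p j = 0 then G (j, False) p else 0))"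
    unfolding facepts_def by (simp add: sum.inter_filter sum.distrib)
  finally show ?thesis .
qed

lemma facepts_grid: "p \<in> facepts N f \<Longrightarrow> p \<in> grid N"
  by (simp add: facepts_def)

lemma mv_kron_diff: "mv N (kron k (\<lambda>x y. D x y - Dh x y)) u p = mv N (kron k D) u p - mv N (kron k Dh) u p"
  unfolding mv_def kron_def sum_subtractf[symmetric] by (intro sum.cong) (auto simp: algebra_simps)

lemma mv_sum: "mv N (\<lambda>p q. \<Sum>x\<in>X. F x p q) u p = (\<Sum>x\<in>X. mv N (F x) u p)"
  unfolding mv_def sum_distrib_right by (rule sum.swap)

lemma mv_cmul: "mv N (\<lambda>p q. c p * F p q) u p = c p * mv N F u p"
  unfolding mv_def by (simp add: sum_distrib_left mult_ac)

lemma mv_cdiv: "mv N (\<lambda>p q. c p * F p q / d p) u p = c p * mv N F u p / d p"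
  unfolding mv_def by (simp add: sum_distrib_left sum_divide_distrib mult_ac)

lemma mv_diff: "mv N (\<lambda>p q. F p q - G p q) u p = mv N F u p - mv N G u p"
  unfolding mv_def by (simp add: sum_subtractf left_diff_distrib)

lemma nu_comp: "nu f $ j = (if j = fst f then (if snd f then 1 else -1) else 0)"
  by (simp add: nu_def)

lemma nsum: "(\<Sum>j\<in>UNIV. nu f $ j * F j) = (if snd f then 1 else -1) * F (fst f)"
proof -
  have "(\<Sum>j\<in>UNIV. nu f $ j * F j) = (\<Sum>j\<in>UNIV. if j = fst f then (if snd f then 1 else -1) * F j else 0)"
    by (intro sum.cong) (auto simp: nu_comp)
  then show ?thesis by simp
qed

lemma sum_single_UNIV: "(\<And>j. j \<noteq> a \<Longrightarrow> G j = 0) \<Longrightarrow> (\<Sum>j\<in>(UNIV::'a::finite set). G j) = G a"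
  by (subst sum.remove[of UNIV a]) (auto intro: sum.neutral)

locale setting2 = setting N s mb h thetaR tauH tauR w D Dh Dxx R
  for N s mb h thetaR tauH tauR w D Dh Dxx R +
  fixes Jm :: "('d::finite \<Rightarrow> nat) \<Rightarrow> real^'d^'d"
    and a b :: "('d \<Rightarrow> nat) \<Rightarrow> real"
  assumes J_pos: "\<forall>p\<in>grid N. 0 < det (Jm p)"
    and a_pos: "\<forall>p\<in>grid N. 0 < a p"
    and b_pos: "\<forall>p\<in>grid N. 0 < b p"
    and tauH: "tauH \<ge> real CARD('d) / (h * w 0)"
    and tauR: "tauR \<ge> 1 / (h * thetaR)"
begin

lemma K_right: "p \<in> grid N \<Longrightarrow> Jm p ** Kmat Jm p = mat 1"
proof -
  assume p: "p \<in> grid N"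
  have "0 < det (Jm p)" using J_pos p by blast
  then have "invertible (Jm p)" by (simp add: invertible_det_nz)
  then have "\<exists>A'. Jm p ** A' = mat 1 \<and> A' ** Jm p = mat 1" unfolding invertible_def .
  from someI_ex[OF this] show ?thesis unfolding Kmat_def matrix_inv_def by blast
qed

lemma Kcol: "p \<in> grid N \<Longrightarrow> \<exists>i. Kmat Jm p $ i $ j \<noteq> 0"
proof (rule ccontr)
  assume p: "p \<in> grid N" and "\<not> (\<exists>i. Kmat Jm p $ i $ j \<noteq> 0)"
  then have z: "\<And>i. Kmat Jm p $ i $ j = 0" by auto
  have "(Jm p ** Kmat Jm p) $ j $ j = 0" by (simp add: matrix_matrix_mult_def z)
  then show False using K_right[OF p] by (simp add: mat_def)
qed

lemma Kv_nu: "(Kmat Jm p *v nu f) $ i = (if snd f then 1 else -1) * Kmat Jm p $ i $ fst f"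
  by (simp add: matrix_vector_mult_def nu_comp if_distrib cong: if_cong)

lemma gam_pos: "p \<in> grid N \<Longrightarrow> gam Jm f p > 0"
proof -
  assume p: "p \<in> grid N"
  obtain i where i: "Kmat Jm p $ i $ fst f \<noteq> 0" using Kcol[OF p] by blast
  have "Kmat Jm p *v nu f \<noteq> 0"
  proof
    assume "Kmat Jm p *v nu f = 0"
    then have "(Kmat Jm p *v nu f) $ i = 0" by simp
    then show False using i by (simp add: Kv_nu split: if_splits)
  qed
  then show ?thesis unfolding gam_def Jdet_def using J_pos p by simp
qed

lemma eta_pos: "p \<in> grid N \<Longrightarrow> eta Jm b k p > 0"
proof -
  assume p: "p \<in> grid N"
  obtain i where i: "Kmat Jm p $ i $ k \<noteq> 0" using Kcol[OF p] by blast
  have "eta Jm b k p = Jdet Jm p * b p * (\<Sum>i\<in>UNIV. (Kmat Jm p $ i $ k)\<^sup>2)"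
    unfolding eta_def alpha_def by (simp add: sum_distrib_left power2_eq_square mult_ac)
  moreover have "(\<Sum>i\<in>UNIV. (Kmat Jm p $ i $ k)\<^sup>2) > 0"
    by (rule sum_pos2[of UNIV i]) (use i in auto)
  ultimately show ?thesis using J_pos b_pos p by (simp add: Jdet_def)
qed

lemma Dn_expand:
  assumes p: "p \<in> grid N"
  shows "b p * mv N (Dn D Dh Jm f) u p * gam Jm f p
    = (if snd f then 1 else -1) * ((\<Sum>k\<in>UNIV. cf Jm b (fst f) k p * mv N (kron k D) u p)
        - cf Jm b (fst f) (fst f) p * (mv N (kron (fst f) D) u p - mv N (kron (fst f) Dh) u p))"
proof -
  let ?g = "gam Jm f p"
  let ?s = "(if snd f then 1 else -1) :: real"
  have g: "?g \<noteq> 0" using gam_pos[OF p, where f=f] by simp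
  have "mv N (Dn D Dh Jm f) u p
     = (\<Sum>j\<in>UNIV. \<Sum>i\<in>UNIV. \<Sum>k\<in>UNIV. nu f $ j * alpha Jm p i j i k * mv N (kron k D) u p / ?g)
     - (\<Sum>k\<in>UNIV. nu f $ k * (\<Sum>i\<in>UNIV. alpha Jm p i k i k) * mv N (kron k (\<lambda>x y. D x y - Dh x y)) u p / ?g)"
    unfolding Dn_def by (simp only: mv_diff mv_sum mv_cmul) (simp add: times_divide_eq_left)
  also have "\<dots> = (\<Sum>i\<in>UNIV. \<Sum>k\<in>UNIV. ?s * alpha Jm p i (fst f) i k * mv N (kron k D) u p / ?g)
     - ?s * (\<Sum>i\<in>UNIV. alpha Jm p i (fst f) i (fst f)) * mv N (kron (fst f) (\<lambda>x y. D x y - Dh x y)) u p / ?g"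
  proof -
    have 1: "(\<Sum>j\<in>UNIV. \<Sum>i\<in>UNIV. \<Sum>k\<in>UNIV. nu f $ j * alpha Jm p i j i k * mv N (kron k D) u p / ?g)
       = (\<Sum>i\<in>UNIV. \<Sum>k\<in>UNIV. nu f $ fst f * alpha Jm p i (fst f) i k * mv N (kron k D) u p / ?g)"
      by (rule sum_single_UNIV) (simp add: nu_comp)
    have 2: "(\<Sum>k\<in>UNIV. nu f $ k * (\<Sum>i\<in>UNIV. alpha Jm p i k i k) * mv N (kron k (\<lambda>x y. D x y - Dh x y)) u p / ?g)
       = nu f $ fst f * (\<Sum>i\<in>UNIV. alpha Jm p i (fst f) i (fst f)) * mv N (kron (fst f) (\<lambda>x y. D x y - Dh x y)) u p / ?g"
      by (rule sum_single_UNIV) (simp add: nu_comp)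
    show ?thesis unfolding 1 2 by (simp add: nu_comp)
  qed
  also have "\<dots> = ?s / ?g * ((\<Sum>i\<in>UNIV. \<Sum>k\<in>UNIV. alpha Jm p i (fst f) i k * mv N (kron k D) u p)
     - (\<Sum>i\<in>UNIV. alpha Jm p i (fst f) i (fst f)) * mv N (kron (fst f) (\<lambda>x y. D x y - Dh x y)) u p)"
    by (simp add: sum_distrib_left sum_distrib_right sum_divide_distrib sum_negf algebra_simps)
  finally have e: "mv N (Dn D Dh Jm f) u p = \<dots>" .
  have sw: "(\<Sum>i\<in>UNIV. \<Sum>k\<in>UNIV. alpha Jm p i (fst f) i k * mv N (kron k D) u p)
      = (\<Sum>k\<in>UNIV. \<Sum>i\<in>UNIV. alpha Jm p i (fst f) i k * mv N (kron k D) u p)"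
    by (rule sum.swap)
  show ?thesis unfolding e mv_kron_diff cf_def sw using g
    by (simp add: sum_distrib_left sum_distrib_right algebra_simps)
qed

end


context setting begin

lemma DD_off:
  fixes u c :: "('d::finite \<Rightarrow> nat) \<Rightarrow> real"
  assumes "j \<noteq> k"
  shows "mv N (DD N D Dxx j k c) u r = (\<Sum>z\<in>grid N. kron j D r z * c z * mv N (kron k D) u z)"
proof -
  have "mv N (DD N D Dxx j k c) u r = (\<Sum>q\<in>grid N. \<Sum>z\<in>grid N. kron j D r z * c z * (kron k D z q * u q))"
    unfolding mv_def DD_def using assms by (simp add: sum_distrib_right sum_distrib_left mult_ac)
  also have "\<dots> = (\<Sum>z\<in>grid N. \<Sum>q\<in>grid N. kron j D r z * c z * (kron k D z q * u q))"
    by (rule sum.swap)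
  also have "\<dots> = (\<Sum>z\<in>grid N. kron j D r z * c z * mv N (kron k D) u z)"
    unfolding mv_def by (simp add: sum_distrib_left)
  finally show ?thesis .
qed

lemma DDL:
  fixes u v c :: "('d::finite \<Rightarrow> nat) \<Rightarrow> real"
  shows "(\<Sum>r\<in>grid N. v r * Hfull h w r * mv N (DD N D Dxx j k c) u r)
    = - (\<Sum>z\<in>grid N. Hfull h w z * c z * mv N (kron k D) u z * mv N (kron j D) v z)
      + (\<Sum>z\<in>grid N. BT N h w j z * v z * c z * mv N (kron k D) u z)
      - (if j = k then (\<Sum>z\<in>grid N. BT N h w j z * v z * c z * (mv N (kron j D) u z - mv N (kron j Dh) u z))
           + (\<Sum>r\<in>grid N. \<Sum>q\<in>grid N. v r * Rii N h w R j c r q * u q) else 0)"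
proof (cases "j = k")
  case True
  have "(\<Sum>r\<in>grid N. v r * Hfull h w r * mv N (DD N D Dxx j k c) u r)
      = (\<Sum>r\<in>grid N. v r * Hfull h w r * mv N (Dii N Dxx j c) u r)"
  proof -
    have "DD N D Dxx j k c = Dii N Dxx j c" using True by (simp add: fun_eq_iff DD_def)
    then show ?thesis by simp
  qed
  also have "\<dots> = - (\<Sum>z\<in>grid N. Hfull h w z * c z * mv N (kron j D) u z * mv N (kron j D) v z)
      - (\<Sum>r\<in>grid N. \<Sum>q\<in>grid N. v r * Rii N h w R j c r q * u q)
      + (\<Sum>r\<in>grid N. BT N h w j r * v r * c r * mv N (kron j Dh) u r)"
    by (rule T2)
  finally show ?thesis using True
    by (simp add: algebra_simps sum_subtractf)
next
  case False
  have "(\<Sum>r\<in>grid N. v r * Hfull h w r * mv N (DD N D Dxx j k c) u r)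
      = (\<Sum>r\<in>grid N. \<Sum>z\<in>grid N. v r * Hfull h w r * kron j D r z * (c z * mv N (kron k D) u z))"
    unfolding DD_off[OF False] by (simp add: sum_distrib_left mult_ac)
  also have "\<dots> = (\<Sum>z\<in>grid N. \<Sum>r\<in>grid N. v r * Hfull h w r * kron j D r z * (c z * mv N (kron k D) u z))"
    by (rule sum.swap)
  also have "\<dots> = (\<Sum>z\<in>grid N. (- Hfull h w z * mv N (kron j D) v z + BT N h w j z * v z) * (c z * mv N (kron k D) u z))"
    by (intro sum.cong refl) (simp add: sum_distrib_right[symmetric] T1)
  also have "\<dots> = - (\<Sum>z\<in>grid N. Hfull h w z * c z * mv N (kron k D) u z * mv N (kron j D) v z)
      + (\<Sum>z\<in>grid N. BT N h w j z * v z * c z * mv N (kron k D) u z)"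
    by (simp add: algebra_simps sum.distrib sum_subtractf sum_negf)
  finally show ?thesis using False by simp
qed

end

context setting2 begin

lemma SAT_part:
  fixes u v :: "('d \<Rightarrow> nat) \<Rightarrow> real"
  shows "(\<Sum>r\<in>grid N. v r * Hfull h w r * SAT N h w D Dh mb Jm b tauH tauR u r)
    = ip_bdry N h w Jm (\<lambda>f p. b p * mv N (Dn D Dh Jm f) v p) (\<lambda>f p. u p)
    - ip_bdry N h w Jm (\<lambda>f p. Apen N mb Jm b tauH tauR f p * u p) (\<lambda>f p. v p)"
proof -
  define X where "X r = (\<Sum>f\<in>UNIV. \<Sum>q\<in>facepts N f.
        (b q * Dn D Dh Jm f q r) * gam Jm f q * Hexcept h w (fst f) q * (u q - 0))" for r
  define Y where "Y r = (\<Sum>f\<in>UNIV. if r \<in> facepts N f then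
        Apen N mb Jm b tauH tauR f r * gam Jm f r * Hexcept h w (fst f) r * (u r - 0) else 0)" for r
  have "(\<Sum>r\<in>grid N. v r * Hfull h w r * SAT N h w D Dh mb Jm b tauH tauR u r)
      = (\<Sum>r\<in>grid N. v r * X r) - (\<Sum>r\<in>grid N. v r * Y r)"
    unfolding sum_subtractf[symmetric]
  proof (intro sum.cong refl)
    fix r :: "'d \<Rightarrow> nat" assume r: "r \<in> grid N"
    have "Hfull h w r \<noteq> 0" using Hfull_pos[OF r] by simp
    then show "v r * Hfull h w r * SAT N h w D Dh mb Jm b tauH tauR u r = v r * X r - v r * Y r"
      unfolding SAT_def X_def[symmetric] Y_def[symmetric] by (simp add: field_simps)
  qed
  also have "(\<Sum>r\<in>grid N. v r * X r) = ip_bdry N h w Jm (\<lambda>f p. b p * mv N (Dn D Dh Jm f) v p) (\<lambda>f p. u p)"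
  proof -
    have "(\<Sum>r\<in>grid N. v r * X r) = (\<Sum>r\<in>grid N. \<Sum>f\<in>UNIV. \<Sum>q\<in>facepts N f.
        v r * (b q * Dn D Dh Jm f q r * gam Jm f q * Hexcept h w (fst f) q * u q))"
      unfolding X_def by (simp add: sum_distrib_left)
    also have "\<dots> = (\<Sum>f\<in>UNIV. \<Sum>r\<in>grid N. \<Sum>q\<in>facepts N f.
        v r * (b q * Dn D Dh Jm f q r * gam Jm f q * Hexcept h w (fst f) q * u q))"
      by (rule sum.swap)
    also have "\<dots> = (\<Sum>f\<in>UNIV. \<Sum>q\<in>facepts N f. \<Sum>r\<in>grid N.
        v r * (b q * Dn D Dh Jm f q r * gam Jm f q * Hexcept h w (fst f) q * u q))"
      by (intro sum.cong refl sum.swap)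
    also have "\<dots> = ip_bdry N h w Jm (\<lambda>f p. b p * mv N (Dn D Dh Jm f) v p) (\<lambda>f p. u p)"
      unfolding ip_bdry_def mv_def by (simp add: sum_distrib_left sum_distrib_right mult_ac)
    finally show ?thesis .
  qed
  also have "(\<Sum>r\<in>grid N. v r * Y r) = ip_bdry N h w Jm (\<lambda>f p. Apen N mb Jm b tauH tauR f p * u p) (\<lambda>f p. v p)"
  proof -
    have "(\<Sum>r\<in>grid N. v r * Y r) = (\<Sum>f\<in>UNIV. \<Sum>r\<in>grid N. if r \<in> facepts N f then
        v r * (Apen N mb Jm b tauH tauR f r * gam Jm f r * Hexcept h w (fst f) r * u r) else 0)"
      unfolding Y_def by (simp add: sum_distrib_left if_distrib sum.swap[of _ "grid N" UNIV] cong: if_cong)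
    also have "\<dots> = (\<Sum>f\<in>UNIV. \<Sum>r\<in>facepts N f.
        v r * (Apen N mb Jm b tauH tauR f r * gam Jm f r * Hexcept h w (fst f) r * u r))"
    proof (rule sum.cong[OF refl])
      fix f :: "'d \<times> bool"
      have e: "grid N \<inter> facepts N f = facepts N f" by (auto simp: facepts_def)
      have gen: "\<And>G. (\<Sum>r\<in>grid N. if r \<in> facepts N f then G r else 0) = sum G (facepts N f)"
        by (simp add: sum.inter_restrict[symmetric] e)
      show "(\<Sum>r\<in>grid N. if r \<in> facepts N f then
        v r * (Apen N mb Jm b tauH tauR f r * gam Jm f r * Hexcept h w (fst f) r * u r) else 0)
        = (\<Sum>r\<in>facepts N f. v r * (Apen N mb Jm b tauH tauR f r * gam Jm f r * Hexcept h w (fst f) r * u r))"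
        by (rule gen)
    qed
    also have "\<dots> = ip_bdry N h w Jm (\<lambda>f p. Apen N mb Jm b tauH tauR f p * u p) (\<lambda>f p. v p)"
      unfolding ip_bdry_def by (simp add: mult_ac)
    finally show ?thesis .
  qed
  finally show ?thesis .
qed

end


context setting2 begin

lemma S4:
  fixes u v :: "('d \<Rightarrow> nat) \<Rightarrow> real"
  shows "(\<Sum>i\<in>UNIV. ip_vol N h w Jm (\<lambda>p. sqrt (b p) * Dx N D Jm i v p) (\<lambda>p. sqrt (b p) * Dx N D Jm i u p))
    = (\<Sum>j\<in>UNIV. \<Sum>k\<in>UNIV. \<Sum>z\<in>grid N. Hfull h w z * cf Jm b j k z * mv N (kron k D) u z * mv N (kron j D) v z)"
proof -
  have "(\<Sum>i\<in>UNIV. ip_vol N h w Jm (\<lambda>p. sqrt (b p) * Dx N D Jm i v p) (\<lambda>p. sqrt (b p) * Dx N D Jm i u p))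
     = (\<Sum>i\<in>UNIV. \<Sum>z\<in>grid N. Hfull h w z * Jdet Jm z * b z * (Dx N D Jm i v z * Dx N D Jm i u z))"
    unfolding ip_vol_def
  proof (intro sum.cong refl)
    fix i and z :: "'d \<Rightarrow> nat" assume z: "z \<in> grid N"
    have "0 < b z" using b_pos z by blast
    then have "sqrt (b z) * sqrt (b z) = b z" by simp
    then show "sqrt (b z) * Dx N D Jm i v z * Hfull h w z * (Jdet Jm z * (sqrt (b z) * Dx N D Jm i u z))
       = Hfull h w z * Jdet Jm z * b z * (Dx N D Jm i v z * Dx N D Jm i u z)"
      by (metis (no_types, lifting) mult.assoc mult.commute mult.left_commute)
  qed
  also have "\<dots> = (\<Sum>z\<in>grid N. \<Sum>i\<in>UNIV. Hfull h w z * Jdet Jm z * b z * (Dx N D Jm i v z * Dx N D Jm i u z))"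
    by (rule sum.swap)
  also have "\<dots> = (\<Sum>z\<in>grid N. \<Sum>j\<in>UNIV. \<Sum>k\<in>UNIV. Hfull h w z * cf Jm b j k z * mv N (kron k D) u z * mv N (kron j D) v z)"
  proof (rule sum.cong[OF refl])
    fix z :: "'d \<Rightarrow> nat"
    have "(\<Sum>i\<in>UNIV. Hfull h w z * Jdet Jm z * b z * (Dx N D Jm i v z * Dx N D Jm i u z))
        = (\<Sum>i\<in>UNIV. \<Sum>j\<in>UNIV. \<Sum>k\<in>UNIV. Hfull h w z * Jdet Jm z * b z * (Kmat Jm z $ i $ j * mv N (kron j D) v z * (Kmat Jm z $ i $ k * mv N (kron k D) u z)))"
      unfolding Dx_def sum_product by (simp add: sum_distrib_left)
    also have "\<dots> = (\<Sum>j\<in>UNIV. \<Sum>i\<in>UNIV. \<Sum>k\<in>UNIV. Hfull h w z * Jdet Jm z * b z * (Kmat Jm z $ i $ j * mv N (kron j D) v z * (Kmat Jm z $ i $ k * mv N (kron k D) u z)))"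
      by (rule sum.swap)
    also have "\<dots> = (\<Sum>j\<in>UNIV. \<Sum>k\<in>UNIV. \<Sum>i\<in>UNIV. Hfull h w z * Jdet Jm z * b z * (Kmat Jm z $ i $ j * mv N (kron j D) v z * (Kmat Jm z $ i $ k * mv N (kron k D) u z)))"
      by (intro sum.cong refl sum.swap)
    also have "\<dots> = (\<Sum>j\<in>UNIV. \<Sum>k\<in>UNIV. Hfull h w z * cf Jm b j k z * mv N (kron k D) u z * mv N (kron j D) v z)"
      unfolding cf_def alpha_def by (simp add: sum_distrib_left sum_distrib_right mult_ac)
    finally show "(\<Sum>i\<in>UNIV. Hfull h w z * Jdet Jm z * b z * (Dx N D Jm i v z * Dx N D Jm i u z)) = (\<Sum>j\<in>UNIV. \<Sum>k\<in>UNIV. Hfull h w z * cf Jm b j k z * mv N (kron k D) u z * mv N (kron j D) v z)" .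
  qed
  also have "\<dots> = (\<Sum>j\<in>UNIV. \<Sum>z\<in>grid N. \<Sum>k\<in>UNIV. Hfull h w z * cf Jm b j k z * mv N (kron k D) u z * mv N (kron j D) v z)"
    by (rule sum.swap)
  also have "\<dots> = (\<Sum>j\<in>UNIV. \<Sum>k\<in>UNIV. \<Sum>z\<in>grid N. Hfull h w z * cf Jm b j k z * mv N (kron k D) u z * mv N (kron j D) v z)"
    by (intro sum.cong refl sum.swap)
  finally show ?thesis .
qed

lemma S5:
  fixes u v :: "('d \<Rightarrow> nat) \<Rightarrow> real"
  shows "ip_bdry N h w Jm (\<lambda>f p. b p * mv N (Dn D Dh Jm f) u p) (\<lambda>f p. v p)
    = (\<Sum>j\<in>UNIV. \<Sum>k\<in>UNIV. \<Sum>z\<in>grid N. BT N h w j z * v z * cf Jm b j k z * mv N (kron k D) u z)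
    - (\<Sum>j\<in>UNIV. \<Sum>z\<in>grid N. BT N h w j z * v z * cf Jm b j j z * (mv N (kron j D) u z - mv N (kron j Dh) u z))"
proof -
  define S where "S j z = (\<Sum>k\<in>UNIV. cf Jm b j k z * mv N (kron k D) u z)
        - cf Jm b j j z * (mv N (kron j D) u z - mv N (kron j Dh) u z)" for j z
  have "ip_bdry N h w Jm (\<lambda>f p. b p * mv N (Dn D Dh Jm f) u p) (\<lambda>f p. v p)
      = (\<Sum>f\<in>UNIV. \<Sum>p\<in>facepts N f. Hexcept h w (fst f) p * v p * ((if snd f then 1 else -1) * S (fst f) p))"
    unfolding ip_bdry_def
  proof (intro sum.cong refl)
    fix f and p :: "'d \<Rightarrow> nat" assume "p \<in> facepts N f"
    then have p: "p \<in> grid N" by (rule facepts_grid)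
    show "b p * mv N (Dn D Dh Jm f) u p * Hexcept h w (fst f) p * (gam Jm f p * v p)
        = Hexcept h w (fst f) p * v p * ((if snd f then 1 else -1) * S (fst f) p)"
      using Dn_expand[OF p, of f u] unfolding S_def by (simp add: mult_ac)
  qed
  also have "\<dots> = (\<Sum>j\<in>UNIV. \<Sum>p\<in>grid N. BT N h w j p * v p * S j p)"
    unfolding face_sum
  proof (intro sum.cong refl)
    fix j and p :: "'d \<Rightarrow> nat" assume "p \<in> grid N"
    show "(if p j = N - 1 then Hexcept h w (fst (j, True)) p * v p * ((if snd (j, True) then 1 else -1) * S (fst (j, True)) p) else 0) +
          (if p j = 0 then Hexcept h w (fst (j, False)) p * v p * ((if snd (j, False) then 1 else -1) * S (fst (j, False)) p) else 0)
        = BT N h w j p * v p * S j p"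
      unfolding BT_def by (simp add: algebra_simps)
  qed
  also have "\<dots> = (\<Sum>j\<in>UNIV. \<Sum>k\<in>UNIV. \<Sum>z\<in>grid N. BT N h w j z * v z * cf Jm b j k z * mv N (kron k D) u z)
    - (\<Sum>j\<in>UNIV. \<Sum>z\<in>grid N. BT N h w j z * v z * cf Jm b j j z * (mv N (kron j D) u z - mv N (kron j Dh) u z))"
  proof -
    have "(\<Sum>p\<in>grid N. BT N h w j p * v p * S j p) =
       (\<Sum>k\<in>UNIV. \<Sum>z\<in>grid N. BT N h w j z * v z * cf Jm b j k z * mv N (kron k D) u z)
       - (\<Sum>z\<in>grid N. BT N h w j z * v z * cf Jm b j j z * (mv N (kron j D) u z - mv N (kron j Dh) u z))" for j
    proof -
      have "(\<Sum>p\<in>grid N. BT N h w j p * v p * S j p) =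
         (\<Sum>z\<in>grid N. \<Sum>k\<in>UNIV. BT N h w j z * v z * cf Jm b j k z * mv N (kron k D) u z)
         - (\<Sum>z\<in>grid N. BT N h w j z * v z * cf Jm b j j z * (mv N (kron j D) u z - mv N (kron j Dh) u z))"
        unfolding S_def sum_subtractf[symmetric] by (intro sum.cong refl) (simp add: sum_distrib_left algebra_simps)
      then show ?thesis by (simp add: sum.swap[of _ "grid N" UNIV])
    qed
    then show ?thesis by (simp add: sum_subtractf)
  qed
  finally show ?thesis .
qed

end


context setting2 begin

lemma MI:
  fixes u v :: "('d \<Rightarrow> nat) \<Rightarrow> real"
  shows "(\<Sum>r\<in>grid N. v r * Hfull h w r * rhs N h w D Dh Dxx mb Jm b tauH tauR u r)
    + (\<Sum>i\<in>UNIV. ip_vol N h w Jm (\<lambda>p. sqrt (b p) * Dx N D Jm i v p) (\<lambda>p. sqrt (b p) * Dx N D Jm i u p))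
    + (\<Sum>k\<in>UNIV. \<Sum>r\<in>grid N. \<Sum>q\<in>grid N. v r * Rii N h w R k (eta Jm b k) r q * u q)
    - ip_bdry N h w Jm (\<lambda>f p. b p * mv N (Dn D Dh Jm f) u p) (\<lambda>f p. v p)
    - ip_bdry N h w Jm (\<lambda>f p. b p * mv N (Dn D Dh Jm f) v p) (\<lambda>f p. u p)
    + ip_bdry N h w Jm (\<lambda>f p. Apen N mb Jm b tauH tauR f p * u p) (\<lambda>f p. v p) = 0"
proof -
  have cfe: "(\<lambda>q. \<Sum>i\<in>UNIV. alpha Jm q i j i k * b q) = cf Jm b j k" for j k
    by (simp add: fun_eq_iff cf_def)
  define A where "A j k = (\<Sum>z\<in>grid N. Hfull h w z * cf Jm b j k z * mv N (kron k D) u z * mv N (kron j D) v z)" for j k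
  define B where "B j k = (\<Sum>z\<in>grid N. BT N h w j z * v z * cf Jm b j k z * mv N (kron k D) u z)" for j k
  define C where "C j = (\<Sum>z\<in>grid N. BT N h w j z * v z * cf Jm b j j z * (mv N (kron j D) u z - mv N (kron j Dh) u z))" for j
  define RR where "RR j = (\<Sum>r\<in>grid N. \<Sum>q\<in>grid N. v r * Rii N h w R j (cf Jm b j j) r q * u q)" for j
  have "(\<Sum>r\<in>grid N. v r * Hfull h w r * rhs N h w D Dh Dxx mb Jm b tauH tauR u r)
      = (\<Sum>j\<in>UNIV. \<Sum>k\<in>UNIV. \<Sum>r\<in>grid N. v r * Hfull h w r * mv N (DD N D Dxx j k (cf Jm b j k)) u r)
        + (\<Sum>r\<in>grid N. v r * Hfull h w r * SAT N h w D Dh mb Jm b tauH tauR u r)"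
  proof -
    have "(\<Sum>r\<in>grid N. v r * Hfull h w r * rhs N h w D Dh Dxx mb Jm b tauH tauR u r)
      = (\<Sum>r\<in>grid N. \<Sum>j\<in>UNIV. \<Sum>k\<in>UNIV. v r * Hfull h w r * mv N (DD N D Dxx j k (cf Jm b j k)) u r)
        + (\<Sum>r\<in>grid N. v r * Hfull h w r * SAT N h w D Dh mb Jm b tauH tauR u r)"
      unfolding rhs_def cfe by (simp add: sum.distrib sum_distrib_left algebra_simps)
    also have "(\<Sum>r\<in>grid N. \<Sum>j\<in>UNIV. \<Sum>k\<in>UNIV. v r * Hfull h w r * mv N (DD N D Dxx j k (cf Jm b j k)) u r)
        = (\<Sum>j\<in>UNIV. \<Sum>k\<in>UNIV. \<Sum>r\<in>grid N. v r * Hfull h w r * mv N (DD N D Dxx j k (cf Jm b j k)) u r)"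
      by (simp add: sum.swap[of _ "grid N" UNIV])
    finally show ?thesis .
  qed
  also have "(\<Sum>j\<in>UNIV. \<Sum>k\<in>UNIV. \<Sum>r\<in>grid N. v r * Hfull h w r * mv N (DD N D Dxx j k (cf Jm b j k)) u r)
      = (\<Sum>j\<in>UNIV. \<Sum>k\<in>UNIV. - A j k + B j k - (if j = k then C j + RR j else 0))"
    unfolding DDL A_def B_def C_def RR_def by (intro sum.cong refl) auto
  also have "\<dots> = - (\<Sum>j\<in>UNIV. \<Sum>k\<in>UNIV. A j k) + (\<Sum>j\<in>UNIV. \<Sum>k\<in>UNIV. B j k) - (\<Sum>j\<in>UNIV. C j + RR j)"
    by (simp add: sum.distrib sum_subtractf sum_negf)
  finally have 1: "(\<Sum>r\<in>grid N. v r * Hfull h w r * rhs N h w D Dh Dxx mb Jm b tauH tauR u r)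
     = - (\<Sum>j\<in>UNIV. \<Sum>k\<in>UNIV. A j k) + (\<Sum>j\<in>UNIV. \<Sum>k\<in>UNIV. B j k) - (\<Sum>j\<in>UNIV. C j + RR j)
       + (ip_bdry N h w Jm (\<lambda>f p. b p * mv N (Dn D Dh Jm f) v p) (\<lambda>f p. u p)
    - ip_bdry N h w Jm (\<lambda>f p. Apen N mb Jm b tauH tauR f p * u p) (\<lambda>f p. v p))"
    unfolding SAT_part .
  have 2: "(\<Sum>i\<in>UNIV. ip_vol N h w Jm (\<lambda>p. sqrt (b p) * Dx N D Jm i v p) (\<lambda>p. sqrt (b p) * Dx N D Jm i u p))
     = (\<Sum>j\<in>UNIV. \<Sum>k\<in>UNIV. A j k)"
    unfolding S4 A_def ..
  have 3: "(\<Sum>k\<in>UNIV. \<Sum>r\<in>grid N. \<Sum>q\<in>grid N. v r * Rii N h w R k (eta Jm b k) r q * u q) = (\<Sum>j\<in>UNIV. RR j)"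
    unfolding RR_def eta_cf ..
  have 4: "ip_bdry N h w Jm (\<lambda>f p. b p * mv N (Dn D Dh Jm f) u p) (\<lambda>f p. v p)
     = (\<Sum>j\<in>UNIV. \<Sum>k\<in>UNIV. B j k) - (\<Sum>j\<in>UNIV. C j)"
    unfolding S5 B_def C_def ..
  show ?thesis unfolding 1 2 3 4 by (simp add: sum.distrib)
qed

end


lemma LD:
  fixes F :: "('d::finite \<Rightarrow> nat) \<Rightarrow> real"
  assumes N: "0 < N"
  shows "(\<Sum>p\<in>grid N. F p) = (\<Sum>p0\<in>{p\<in>grid N. p j = 0}. \<Sum>m<N. F (p0(j:=m)))"
proof -
  have sub: "(\<lambda>p. p(j:=0)) ` grid N \<subseteq> {p\<in>grid N. p j = 0}" using N by (auto simp: grid_def)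
  have fin: "finite ({p\<in>grid N. p j = 0} :: ('d \<Rightarrow> nat) set)" by simp
  have "(\<Sum>p\<in>grid N. F p) = (\<Sum>p0\<in>{p\<in>grid N. p j = 0}. sum F {x. x \<in> grid N \<and> x(j:=0) = p0})"
    by (rule sum.group[OF finite_grid fin sub, symmetric])
  also have "\<dots> = (\<Sum>p0\<in>{p\<in>grid N. p j = 0}. \<Sum>m<N. F (p0(j:=m)))"
  proof (rule sum.cong[OF refl])
    fix p0 :: "'d \<Rightarrow> nat" assume p0: "p0 \<in> {p\<in>grid N. p j = 0}"
    have "{x. x \<in> grid N \<and> x(j:=0) = p0} = (\<lambda>m. p0(j:=m)) ` {..<N}"
    proof (rule set_eqI, rule iffI)
      fix x :: "'d \<Rightarrow> nat" assume "x \<in> {x. x \<in> grid N \<and> x(j:=0) = p0}"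
      then have x: "x \<in> grid N" "p0 = x(j:=0)" by auto
      then have "x = p0(j := x j)" by simp
      moreover have "x j < N" using x by (auto simp: grid_def)
      ultimately show "x \<in> (\<lambda>m. p0(j:=m)) ` {..<N}" by blast
    next
      fix x :: "'d \<Rightarrow> nat" assume "x \<in> (\<lambda>m. p0(j:=m)) ` {..<N}"
      then obtain m where m: "m < N" "x = p0(j:=m)" by auto
      then show "x \<in> {x. x \<in> grid N \<and> x(j:=0) = p0}" using p0 by (auto simp: grid_def fun_eq_iff)
    qed
    moreover have "inj_on (\<lambda>m. p0(j:=m)) {..<N}" by (auto simp: inj_on_def fun_eq_iff)
    ultimately show "sum F {x. x \<in> grid N \<and> x(j:=0) = p0} = (\<Sum>m<N. F (p0(j:=m)))"
      by (simp add: sum.reindex)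
  qed
  finally show ?thesis .
qed


context setting begin
lemma PRl: "(\<forall>k<N. 0 \<le> c k) \<Longrightarrow>
        (\<Sum>i<N. \<Sum>j<N. u i * R c i j * u j)
          \<ge> h * thetaR * Min (c ` {..<mb}) * (\<Sum>j<N. (D 0 j - Dh 0 j) * u j)\<^sup>2
           + h * thetaR * Min (c ` {N - mb..<N}) * (\<Sum>j<N. (D (N - 1) j - Dh (N - 1) j) * u j)\<^sup>2"
  using PR unfolding prop_PR_def by blast
end

context setting2 begin

lemma PL:
  fixes u :: "('d \<Rightarrow> nat) \<Rightarrow> real"
  assumes p0: "p0 \<in> grid N" and p0j: "p0 j = 0"
  shows "(\<Sum>m<N. \<Sum>q\<in>grid N. u (p0(j:=m)) * Rii N h w R j (eta Jm b j) (p0(j:=m)) q * u q)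
    \<ge> Hexcept h w j p0 * (h * thetaR) * (etamin N mb Jm b (j, False) j p0 * (mv N (kron j D) u p0 - mv N (kron j Dh) u p0)\<^sup>2
        + etamin N mb Jm b (j, True) j (p0(j:=N-1)) * (mv N (kron j D) u (p0(j:=N-1)) - mv N (kron j Dh) u (p0(j:=N-1)))\<^sup>2)"
proof -
  let ?c = "eta Jm b j"
  let ?lc = "line_restrict N j p0 ?c"
  let ?ul = "\<lambda>m. u (p0(j:=m))"
  let ?E = "Hexcept h w j p0"
  have lcr: "line_restrict N j (p0(j:=m)) ?c = ?lc" for m by (simp add: fun_eq_iff line_restrict_def)
  have lcv: "k < N \<Longrightarrow> ?lc k = ?c (p0(j:=k))" for k by (simp add: line_restrict_def)
  have row: "(\<Sum>q\<in>grid N. Rii N h w R j ?c (p0(j:=m)) q * u q) = ?E * (\<Sum>m'<N. R ?lc m m' * ?ul m')"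
    if m: "m < N" for m
  proof -
    have r: "p0(j:=m) \<in> grid N" using grid_upd[OF p0 m] .
    have "(\<Sum>q\<in>grid N. Rii N h w R j ?c (p0(j:=m)) q * u q)
      = (\<Sum>q\<in>grid N. if (\<forall>k. k \<noteq> j \<longrightarrow> (p0(j:=m)) k = q k) then ?E * R ?lc m (q j) * u q else 0)"
      unfolding Rii_def Dii_def lcr Hexcept_upd by (intro sum.cong refl) auto
    also have "\<dots> = (\<Sum>m'<N. ?E * R ?lc m m' * ?ul m')"
      using line_sum[OF r, of j "\<lambda>q. ?E * R ?lc m (q j) * u q"] by simp
    finally show ?thesis by (simp add: sum_distrib_left mult_ac)
  qed
  have L: "(\<Sum>m<N. \<Sum>q\<in>grid N. u (p0(j:=m)) * Rii N h w R j ?c (p0(j:=m)) q * u q)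
      = ?E * (\<Sum>m<N. \<Sum>m'<N. ?ul m * R ?lc m m' * ?ul m')"
  proof -
    have "(\<Sum>m<N. \<Sum>q\<in>grid N. u (p0(j:=m)) * Rii N h w R j ?c (p0(j:=m)) q * u q)
        = (\<Sum>m<N. ?ul m * (\<Sum>q\<in>grid N. Rii N h w R j ?c (p0(j:=m)) q * u q))"
      by (simp add: sum_distrib_left mult_ac)
    also have "\<dots> = (\<Sum>m<N. ?ul m * (?E * (\<Sum>m'<N. R ?lc m m' * ?ul m')))"
      by (intro sum.cong refl) (simp add: row)
    also have "\<dots> = ?E * (\<Sum>m<N. \<Sum>m'<N. ?ul m * R ?lc m m' * ?ul m')"
      by (simp add: sum_distrib_left mult_ac)
    finally show ?thesis .
  qed
  have PRi: "(\<Sum>m<N. \<Sum>m'<N. ?ul m * R ?lc m m' * ?ul m')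
      \<ge> h * thetaR * Min (?lc ` {..<mb}) * (\<Sum>m'<N. (D 0 m' - Dh 0 m') * ?ul m')\<^sup>2
       + h * thetaR * Min (?lc ` {N - mb..<N}) * (\<Sum>m'<N. (D (N - 1) m' - Dh (N - 1) m') * ?ul m')\<^sup>2"
  proof -
    have "\<forall>k<N. 0 \<le> ?lc k"
    proof (intro allI impI)
      fix k assume k: "k < N"
      show "0 \<le> ?lc k" using lcv[OF k] eta_pos[OF grid_upd[OF p0 k, where j=j], where k=j] by simp
    qed
    then show ?thesis by (rule PRl)
  qed
  have e1: "etamin N mb Jm b (j, False) j p0 = Min (?lc ` {..<mb})"
    unfolding etamin_def side_idx_def using N_mb mb_pos
    by (simp, intro arg_cong[where f=Min] image_cong refl) (simp add: lcv)
  have e2: "etamin N mb Jm b (j, True) j (p0(j:=N-1)) = Min (?lc ` {N - mb..<N})"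
    unfolding etamin_def side_idx_def
    by (simp, intro arg_cong[where f=Min] image_cong refl) (simp add: lcv)
  have d1: "mv N (kron j D) u p0 - mv N (kron j Dh) u p0 = (\<Sum>m'<N. (D 0 m' - Dh 0 m') * ?ul m')"
    unfolding mv_kron[OF p0] p0j by (simp add: sum_subtractf algebra_simps)
  have d2: "mv N (kron j D) u (p0(j:=N-1)) - mv N (kron j Dh) u (p0(j:=N-1)) = (\<Sum>m'<N. (D (N - 1) m' - Dh (N - 1) m') * ?ul m')"
  proof -
    have q: "p0(j:=N-1) \<in> grid N" using grid_upd[OF p0, of "N-1"] N2 by simp
    show ?thesis unfolding mv_kron[OF q] by (simp add: sum_subtractf algebra_simps)
  qed
  have Ep: "?E \<ge> 0" using less_imp_le[OF Hexcept_pos[OF p0, where j=j]] .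
  show ?thesis unfolding L e1 e2 d1 d2
    using mult_left_mono[OF PRi Ep] by (simp add: algebra_simps)
qed

end


context setting2 begin

lemma RJ:
  fixes u :: "('d \<Rightarrow> nat) \<Rightarrow> real"
  shows "(\<Sum>p\<in>grid N. \<Sum>q\<in>grid N. u p * Rii N h w R j (eta Jm b j) p q * u q)
    \<ge> h * thetaR * (\<Sum>p\<in>grid N.
         (if p j = N - 1 then Hexcept h w j p * etamin N mb Jm b (j, True) j p * (mv N (kron j D) u p - mv N (kron j Dh) u p)\<^sup>2 else 0)
       + (if p j = 0 then Hexcept h w j p * etamin N mb Jm b (j, False) j p * (mv N (kron j D) u p - mv N (kron j Dh) u p)\<^sup>2 else 0))"
proof -
  have N0: "0 < N" using N2 by simp
  define Dl where "Dl p = mv N (kron j D) u p - mv N (kron j Dh) u p" for p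
  define base where "base = {p\<in>grid N. p j = 0}"
  have "(\<Sum>p\<in>grid N. \<Sum>q\<in>grid N. u p * Rii N h w R j (eta Jm b j) p q * u q)
      = (\<Sum>p0\<in>base. \<Sum>m<N. \<Sum>q\<in>grid N. u (p0(j:=m)) * Rii N h w R j (eta Jm b j) (p0(j:=m)) q * u q)"
    unfolding base_def by (rule LD[OF N0])
  also have "\<dots> \<ge> (\<Sum>p0\<in>base. Hexcept h w j p0 * (h * thetaR) * (etamin N mb Jm b (j, False) j p0 * (Dl p0)\<^sup>2
        + etamin N mb Jm b (j, True) j (p0(j:=N-1)) * (Dl (p0(j:=N-1)))\<^sup>2))"
    unfolding Dl_def base_def by (intro sum_mono PL) auto
  moreover have "h * thetaR * (\<Sum>p\<in>grid N.
         (if p j = N - 1 then Hexcept h w j p * etamin N mb Jm b (j, True) j p * (Dl p)\<^sup>2 else 0)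
       + (if p j = 0 then Hexcept h w j p * etamin N mb Jm b (j, False) j p * (Dl p)\<^sup>2 else 0))
      = (\<Sum>p0\<in>base. Hexcept h w j p0 * (h * thetaR) * (etamin N mb Jm b (j, False) j p0 * (Dl p0)\<^sup>2
        + etamin N mb Jm b (j, True) j (p0(j:=N-1)) * (Dl (p0(j:=N-1)))\<^sup>2))"
  proof -
    have "(\<Sum>p\<in>grid N.
         (if p j = N - 1 then Hexcept h w j p * etamin N mb Jm b (j, True) j p * (Dl p)\<^sup>2 else 0)
       + (if p j = 0 then Hexcept h w j p * etamin N mb Jm b (j, False) j p * (Dl p)\<^sup>2 else 0))
      = (\<Sum>p0\<in>base. \<Sum>m<N.
         (if m = N - 1 then Hexcept h w j (p0(j:=m)) * etamin N mb Jm b (j, True) j (p0(j:=m)) * (Dl (p0(j:=m)))\<^sup>2 else 0)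
       + (if m = 0 then Hexcept h w j (p0(j:=m)) * etamin N mb Jm b (j, False) j (p0(j:=m)) * (Dl (p0(j:=m)))\<^sup>2 else 0))"
      unfolding base_def by (subst LD[OF N0, of _ j]) simp
    also have "\<dots> = (\<Sum>p0\<in>base. Hexcept h w j p0 * etamin N mb Jm b (j, True) j (p0(j:=N-1)) * (Dl (p0(j:=N-1)))\<^sup>2
         + Hexcept h w j p0 * etamin N mb Jm b (j, False) j p0 * (Dl p0)\<^sup>2)"
    proof (rule sum.cong[OF refl])
      fix p0 assume "p0 \<in> base"
      then have "p0 j = 0" by (simp add: base_def)
      then have pp: "p0(j:=0) = p0" by auto
      show "(\<Sum>m<N.
         (if m = N - 1 then Hexcept h w j (p0(j:=m)) * etamin N mb Jm b (j, True) j (p0(j:=m)) * (Dl (p0(j:=m)))\<^sup>2 else 0)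
       + (if m = 0 then Hexcept h w j (p0(j:=m)) * etamin N mb Jm b (j, False) j (p0(j:=m)) * (Dl (p0(j:=m)))\<^sup>2 else 0))
        = Hexcept h w j p0 * etamin N mb Jm b (j, True) j (p0(j:=N-1)) * (Dl (p0(j:=N-1)))\<^sup>2
         + Hexcept h w j p0 * etamin N mb Jm b (j, False) j p0 * (Dl p0)\<^sup>2"
        using N0 pp by (simp add: sum.distrib Hexcept_upd)
    qed
    finally show ?thesis by (simp add: sum_distrib_left algebra_simps)
  qed
  ultimately show ?thesis unfolding Dl_def by simp
qed

end


lemma SI1:
  fixes s x y t e :: real
  assumes "s\<^sup>2 = 1" "0 < e" "1 \<le> t * e"
  shows "0 \<le> - s * x * y + t / 2 * x\<^sup>2 + e / 2 * y\<^sup>2"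
proof -
  have t: "t > 0" using assms by (smt (verit) mult_nonpos_nonneg)
  have "- s * x * y + t / 2 * x\<^sup>2 + e / 2 * y\<^sup>2 = (t * x - s * y)\<^sup>2 / (2 * t) + (e - 1 / t) / 2 * y\<^sup>2"
    using t assms(1) by (simp add: field_simps power2_eq_square)
  moreover have "e - 1 / t \<ge> 0" using t assms by (simp add: field_simps)
  ultimately show ?thesis using t by simp
qed

lemma SI2:
  fixes s a e du u :: real
  assumes "s\<^sup>2 = 1" "0 < a"
  shows "- (a / 2 * du\<^sup>2) \<le> s * e * du * u + e\<^sup>2 * u\<^sup>2 / (2 * a)"
proof -
  have "a / 2 * du\<^sup>2 + s * e * du * u + e\<^sup>2 * u\<^sup>2 / (2 * a) = (a * du + s * e * u)\<^sup>2 / (2 * a)"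
    using assms by (simp add: field_simps power2_eq_square)
  moreover have "(a * du + s * e * u)\<^sup>2 / (2 * a) \<ge> 0" using assms by simp
  ultimately show ?thesis by linarith
qed

context setting2 begin

lemma Apen_gam:
  assumes p: "p \<in> grid N"
  shows "Apen N mb Jm b tauH tauR f p * gam Jm f p
     = tauH * eta Jm b (fst f) p + tauR * (eta Jm b (fst f) p)\<^sup>2 / etamin N mb Jm b f (fst f) p"
proof -
  have g: "gam Jm f p \<noteq> 0" using gam_pos[OF p, where f=f] by simp
  have "(\<Sum>k\<in>UNIV. \<bar>nu f $ k\<bar> * (tauH * eta Jm b k p + tauR * (eta Jm b k p)\<^sup>2 / etamin N mb Jm b f k p))
    = \<bar>nu f $ fst f\<bar> * (tauH * eta Jm b (fst f) p + tauR * (eta Jm b (fst f) p)\<^sup>2 / etamin N mb Jm b f (fst f) p)"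
    by (rule sum_single_UNIV) (simp add: nu_comp)
  then show ?thesis unfolding Apen_def using g by (simp add: nu_comp)
qed

lemma eta_K: "eta Jm b k p = Jdet Jm p * b p * (\<Sum>i\<in>UNIV. (Kmat Jm p $ i $ k)\<^sup>2)"
  unfolding eta_def alpha_def by (simp add: sum_distrib_left power2_eq_square mult_ac)

lemma cf_Dx: "(\<Sum>k\<in>UNIV. cf Jm b j k p * mv N (kron k D) u p)
   = Jdet Jm p * b p * (\<Sum>i\<in>UNIV. Kmat Jm p $ i $ j * Dx N D Jm i u p)"
proof -
  have "(\<Sum>k\<in>UNIV. cf Jm b j k p * mv N (kron k D) u p)
     = (\<Sum>k\<in>UNIV. \<Sum>i\<in>UNIV. Jdet Jm p * b p * (Kmat Jm p $ i $ j * (Kmat Jm p $ i $ k * mv N (kron k D) u p)))"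
    unfolding cf_def alpha_def by (simp add: sum_distrib_right sum_distrib_left mult_ac)
  also have "\<dots> = (\<Sum>i\<in>UNIV. \<Sum>k\<in>UNIV. Jdet Jm p * b p * (Kmat Jm p $ i $ j * (Kmat Jm p $ i $ k * mv N (kron k D) u p)))"
    by (rule sum.swap)
  also have "\<dots> = Jdet Jm p * b p * (\<Sum>i\<in>UNIV. Kmat Jm p $ i $ j * Dx N D Jm i u p)"
    unfolding Dx_def by (simp add: sum_distrib_left)
  finally show ?thesis .
qed

lemma Hfull_face: "p \<in> facepts N f \<Longrightarrow> Hfull h w p = h * w 0 * Hexcept h w (fst f) p"
  unfolding facepts_def using w_end by (auto simp: Hfull_split[of h w p "fst f"] split: if_splits)

lemma BQ:
  fixes u :: "('d \<Rightarrow> nat) \<Rightarrow> real"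
  assumes pf: "p \<in> facepts N f"
  shows "- (b p * mv N (Dn D Dh Jm f) u p * Hexcept h w (fst f) p * (gam Jm f p * u p))
      + 1/2 * (Apen N mb Jm b tauH tauR f p * u p * Hexcept h w (fst f) p * (gam Jm f p * u p))
    \<ge> - (Hfull h w p / (2 * real CARD('d)) * (Jdet Jm p * b p * (\<Sum>i\<in>UNIV. (Dx N D Jm i u p)\<^sup>2)))
      - Hexcept h w (fst f) p * (h * thetaR / 2) * etamin N mb Jm b f (fst f) p
          * (mv N (kron (fst f) D) u p - mv N (kron (fst f) Dh) u p)\<^sup>2"
proof -
  have p: "p \<in> grid N" using pf by (rule facepts_grid)
  define J where "J = fst f"
  define s :: real where "s = (if snd f then 1 else -1)"
  define E where "E = Hexcept h w J p"
  define Jb where "Jb = Jdet Jm p * b p"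
  define K where "K i = Kmat Jm p $ i $ J" for i
  define y where "y i = Dx N D Jm i u p" for i
  define et where "et = eta Jm b J p"
  define em where "em = etamin N mb Jm b f J p"
  define dl where "dl = mv N (kron J D) u p - mv N (kron J Dh) u p"
  define d where "d = real CARD('d)"
  have s2: "s\<^sup>2 = 1" by (simp add: s_def)
  have Ep: "E > 0" unfolding E_def using Hexcept_pos[OF p] .
  have Jbp: "Jb > 0" unfolding Jb_def Jdet_def using J_pos b_pos p by simp
  have etp: "et > 0" unfolding et_def using eta_pos[OF p] .
  have d0: "d > 0" unfolding d_def by simp
  have w0: "w 0 > 0" using w_pos N2 by simp
  have emp: "em > 0"
  proof -
    have ne: "side_idx N mb f \<noteq> {}" using N_mb mb_pos by (auto simp: side_idx_def lessThan_empty_iff)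
    have fin: "finite (side_idx N mb f)" by (simp add: side_idx_def)
    have "\<forall>k\<in>side_idx N mb f. k < N" using N_mb by (auto simp: side_idx_def)
    then have "\<forall>x\<in>(\<lambda>k. eta Jm b J (p(J := k))) ` side_idx N mb f. x > 0"
      using eta_pos grid_upd[OF p] by auto
    then show ?thesis unfolding em_def etamin_def
      using Min_in[of "(\<lambda>k. eta Jm b J (p(J := k))) ` side_idx N mb f"] fin ne by auto
  qed
  have bDn: "b p * mv N (Dn D Dh Jm f) u p * gam Jm f p = s * (Jb * (\<Sum>i\<in>UNIV. K i * y i) - et * dl)"
    using Dn_expand[OF p, of f u] unfolding s_def J_def[symmetric] cf_Dx K_def y_def Jb_def et_def dl_def eta_cf
    by simp
  have Ag: "Apen N mb Jm b tauH tauR f p * gam Jm f p = tauH * et + tauR * et\<^sup>2 / em"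
    unfolding Apen_gam[OF p] et_def em_def J_def ..
  have etK: "et = Jb * (\<Sum>i\<in>UNIV. (K i)\<^sup>2)" unfolding et_def eta_K Jb_def K_def ..
  have HF: "Hfull h w p = h * w 0 * E" unfolding E_def J_def using Hfull_face[OF pf] .
  define e where "e = h * w 0 / d"
  have ep: "e > 0" unfolding e_def using h_pos w0 d0 by simp
  have te: "1 \<le> tauH * e"
  proof -
    have "tauH \<ge> d / (h * w 0)" using tauH unfolding d_def .
    then have "tauH * e \<ge> d / (h * w 0) * e" using ep by (intro mult_right_mono) auto
    also have "d / (h * w 0) * e = 1" unfolding e_def using h_pos w0 d0 by simp
    finally show ?thesis .
  qed
  have tR: "tauR * et\<^sup>2 / em \<ge> et\<^sup>2 / (h * thetaR * em)"
  proof -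
    have "tauR \<ge> 1 / (h * thetaR)" by (rule tauR)
    then have "tauR * (et\<^sup>2 / em) \<ge> 1 / (h * thetaR) * (et\<^sup>2 / em)"
      using emp by (intro mult_right_mono) auto
    then show ?thesis by (simp add: field_simps)
  qed
  have Q1: "- s * Jb * (\<Sum>i\<in>UNIV. K i * y i) * u p + 1/2 * tauH * (Jb * (\<Sum>i\<in>UNIV. (K i)\<^sup>2)) * (u p)\<^sup>2
      \<ge> - (e / 2 * Jb * (\<Sum>i\<in>UNIV. (y i)\<^sup>2))"
  proof -
    have "0 \<le> (\<Sum>i\<in>UNIV. - s * (K i * u p) * y i + tauH / 2 * (K i * u p)\<^sup>2 + e / 2 * (y i)\<^sup>2)"
      by (intro sum_nonneg SI1[OF s2 ep te])
    then have "0 \<le> Jb * (\<Sum>i\<in>UNIV. - s * (K i * u p) * y i + tauH / 2 * (K i * u p)\<^sup>2 + e / 2 * (y i)\<^sup>2)"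
      using Jbp by simp
    then show ?thesis
      by (simp add: sum.distrib sum_subtractf sum_distrib_left sum_distrib_right sum_negf power_mult_distrib algebra_simps)
  qed
  have a: "h * thetaR * em > 0" using h_pos thetaR_pos emp by simp
  have Q2: "s * et * dl * u p + 1/2 * (tauR * et\<^sup>2 / em) * (u p)\<^sup>2 \<ge> - (h * thetaR * em / 2 * dl\<^sup>2)"
  proof -
    have "- (h * thetaR * em / 2 * dl\<^sup>2) \<le> s * et * dl * u p + et\<^sup>2 * (u p)\<^sup>2 / (2 * (h * thetaR * em))"
      by (rule SI2[OF s2 a])
    also have "\<dots> \<le> s * et * dl * u p + 1/2 * (tauR * et\<^sup>2 / em) * (u p)\<^sup>2"
    proof -
      have i1: "et\<^sup>2 / (h * thetaR * em) * ((u p)\<^sup>2 / 2) \<le> tauR * et\<^sup>2 / em * ((u p)\<^sup>2 / 2)"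
        using tR by (intro mult_right_mono) auto
      have i2: "et\<^sup>2 * (u p)\<^sup>2 / (2 * (h * thetaR * em)) = et\<^sup>2 / (h * thetaR * em) * ((u p)\<^sup>2 / 2)" by simp
      have i3: "1/2 * (tauR * et\<^sup>2 / em) * (u p)\<^sup>2 = tauR * et\<^sup>2 / em * ((u p)\<^sup>2 / 2)" by simp
      show ?thesis unfolding i2 i3 using i1 by (rule add_left_mono)
    qed
    finally show ?thesis .
  qed
  have lhs: "- (b p * mv N (Dn D Dh Jm f) u p * Hexcept h w (fst f) p * (gam Jm f p * u p))
      + 1/2 * (Apen N mb Jm b tauH tauR f p * u p * Hexcept h w (fst f) p * (gam Jm f p * u p))
      = E * ((- s * Jb * (\<Sum>i\<in>UNIV. K i * y i) * u p + 1/2 * tauH * (Jb * (\<Sum>i\<in>UNIV. (K i)\<^sup>2)) * (u p)\<^sup>2)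
           + (s * et * dl * u p + 1/2 * (tauR * et\<^sup>2 / em) * (u p)\<^sup>2))"
  proof -
    have "- (b p * mv N (Dn D Dh Jm f) u p * Hexcept h w (fst f) p * (gam Jm f p * u p))
      + 1/2 * (Apen N mb Jm b tauH tauR f p * u p * Hexcept h w (fst f) p * (gam Jm f p * u p))
      = E * (- (b p * mv N (Dn D Dh Jm f) u p * gam Jm f p) * u p + 1/2 * (Apen N mb Jm b tauH tauR f p * gam Jm f p) * (u p)\<^sup>2)"
      unfolding E_def J_def by (simp add: algebra_simps power2_eq_square)
    also have "\<dots> = E * ((- s * Jb * (\<Sum>i\<in>UNIV. K i * y i) * u p + 1/2 * tauH * (Jb * (\<Sum>i\<in>UNIV. (K i)\<^sup>2)) * (u p)\<^sup>2)
           + (s * et * dl * u p + 1/2 * (tauR * et\<^sup>2 / em) * (u p)\<^sup>2))"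
      unfolding bDn Ag etK[symmetric] by (simp add: algebra_simps)
    finally show ?thesis .
  qed
  have rhs: "- (Hfull h w p / (2 * real CARD('d)) * (Jdet Jm p * b p * (\<Sum>i\<in>UNIV. (Dx N D Jm i u p)\<^sup>2)))
      - Hexcept h w (fst f) p * (h * thetaR / 2) * etamin N mb Jm b f (fst f) p
          * (mv N (kron (fst f) D) u p - mv N (kron (fst f) Dh) u p)\<^sup>2
     = E * (- (e / 2 * Jb * (\<Sum>i\<in>UNIV. (y i)\<^sup>2)) + - (h * thetaR * em / 2 * dl\<^sup>2))"
    unfolding HF e_def E_def J_def[symmetric] Jb_def y_def em_def dl_def d_def using d0
    by (simp add: field_simps)
  show ?thesis unfolding lhs rhs
    using Ep Q1 Q2 by (intro mult_left_mono) auto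
qed

end


context setting2 begin

lemma Vol_eq:
  fixes u :: "('d \<Rightarrow> nat) \<Rightarrow> real"
  shows "(\<Sum>i\<in>UNIV. ip_vol N h w Jm (\<lambda>p. sqrt (b p) * Dx N D Jm i u p) (\<lambda>p. sqrt (b p) * Dx N D Jm i u p))
    = (\<Sum>p\<in>grid N. Hfull h w p * (Jdet Jm p * b p * (\<Sum>i\<in>UNIV. (Dx N D Jm i u p)\<^sup>2)))"
proof -
  have "(\<Sum>i\<in>UNIV. ip_vol N h w Jm (\<lambda>p. sqrt (b p) * Dx N D Jm i u p) (\<lambda>p. sqrt (b p) * Dx N D Jm i u p))
     = (\<Sum>i\<in>UNIV. \<Sum>p\<in>grid N. Hfull h w p * (Jdet Jm p * b p * (Dx N D Jm i u p)\<^sup>2))"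
    unfolding ip_vol_def
  proof (intro sum.cong refl)
    fix i and z :: "'d \<Rightarrow> nat" assume z: "z \<in> grid N"
    have "0 < b z" using b_pos z by blast
    then have "sqrt (b z) * sqrt (b z) = b z" by simp
    then show "sqrt (b z) * Dx N D Jm i u z * Hfull h w z * (Jdet Jm z * (sqrt (b z) * Dx N D Jm i u z))
       = Hfull h w z * (Jdet Jm z * b z * (Dx N D Jm i u z)\<^sup>2)"
      by (simp add: power2_eq_square)
  qed
  also have "\<dots> = (\<Sum>p\<in>grid N. \<Sum>i\<in>UNIV. Hfull h w p * (Jdet Jm p * b p * (Dx N D Jm i u p)\<^sup>2))"
    by (rule sum.swap)
  also have "\<dots> = (\<Sum>p\<in>grid N. Hfull h w p * (Jdet Jm p * b p * (\<Sum>i\<in>UNIV. (Dx N D Jm i u p)\<^sup>2)))"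
    by (simp add: sum_distrib_left)
  finally show ?thesis .
qed

lemma face_le:
  fixes G :: "('d \<Rightarrow> nat) \<Rightarrow> real"
  assumes G: "\<And>p. p \<in> grid N \<Longrightarrow> G p \<ge> 0"
  shows "(\<Sum>f\<in>UNIV. \<Sum>p\<in>facepts N f. G p) \<le> real CARD('d) * (\<Sum>p\<in>grid N. G p)"
proof -
  have "(\<Sum>f\<in>UNIV. \<Sum>p\<in>facepts N f. G p)
      = (\<Sum>j\<in>UNIV. \<Sum>p\<in>grid N. (if p j = N - 1 then G p else 0) + (if p j = 0 then G p else 0))"
    by (rule face_sum)
  also have "\<dots> \<le> (\<Sum>j\<in>(UNIV::'d set). \<Sum>p\<in>grid N. G p)"
  proof (intro sum_mono)
    fix j :: 'd and p :: "'d \<Rightarrow> nat" assume p: "p \<in> grid N"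
    show "(if p j = N - 1 then G p else 0) + (if p j = 0 then G p else 0) \<le> G p"
      using G[OF p] N2 by auto
  qed
  also have "\<dots> = real CARD('d) * (\<Sum>p\<in>grid N. G p)" by simp
  finally show ?thesis .
qed

theorem ED_nonneg:
  fixes u ud :: "('d \<Rightarrow> nat) \<Rightarrow> real"
  shows "0 \<le> energy_D N h w D Dh R mb Jm a b tauH tauR u ud"
proof -
  define W where "W p = Jdet Jm p * b p * (\<Sum>i\<in>UNIV. (Dx N D Jm i u p)\<^sup>2)" for p
  define Dl where "Dl j p = mv N (kron j D) u p - mv N (kron j Dh) u p" for j p
  define Z where "Z f p = Hexcept h w (fst f) p * (h * thetaR / 2) * etamin N mb Jm b f (fst f) p * (Dl (fst f) p)\<^sup>2" for f p
  define RRs where "RRs = (\<Sum>k\<in>UNIV. \<Sum>p\<in>grid N. \<Sum>q\<in>grid N. u p * Rii N h w R k (eta Jm b k) p q * u q)"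
  define V where "V = (\<Sum>i\<in>UNIV. ip_vol N h w Jm (\<lambda>p. sqrt (b p) * Dx N D Jm i u p) (\<lambda>p. sqrt (b p) * Dx N D Jm i u p))"
  define KE where "KE = ip_vol N h w Jm (\<lambda>p. sqrt (a p) * ud p) (\<lambda>p. sqrt (a p) * ud p)"
  define d where "d = real CARD('d)"
  have d0: "d > 0" unfolding d_def by simp
  have W0: "p \<in> grid N \<Longrightarrow> W p \<ge> 0" for p :: "'d \<Rightarrow> nat"
    unfolding W_def using J_pos b_pos by (auto simp: Jdet_def intro!: mult_nonneg_nonneg sum_nonneg)
  have KE0: "KE \<ge> 0"
    unfolding KE_def ip_vol_def
  proof (intro sum_nonneg)
    fix p :: "'d \<Rightarrow> nat" assume p: "p \<in> grid N"
    have "0 \<le> Hfull h w p * Jdet Jm p * (sqrt (a p) * ud p)\<^sup>2"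
    proof -
      have "0 < det (Jm p)" using J_pos p by blast
      then show ?thesis using Hfull_pos[OF p] unfolding Jdet_def by (intro mult_nonneg_nonneg) auto
    qed
    then show "0 \<le> sqrt (a p) * ud p * Hfull h w p * (Jdet Jm p * (sqrt (a p) * ud p))"
      by (simp only: power2_eq_square mult.assoc mult.commute mult.left_commute)
  qed
  have V: "V = (\<Sum>p\<in>grid N. Hfull h w p * W p)" unfolding V_def W_def by (rule Vol_eq)
  have bd: "- ip_bdry N h w Jm (\<lambda>f p. b p * mv N (Dn D Dh Jm f) u p) (\<lambda>f p. u p)
      + 1/2 * ip_bdry N h w Jm (\<lambda>f p. Apen N mb Jm b tauH tauR f p * u p) (\<lambda>f p. u p)
      \<ge> - (\<Sum>f\<in>UNIV. \<Sum>p\<in>facepts N f. Hfull h w p * W p / (2 * d)) - (\<Sum>f\<in>UNIV. \<Sum>p\<in>facepts N f. Z f p)"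
  proof -
    have "- ip_bdry N h w Jm (\<lambda>f p. b p * mv N (Dn D Dh Jm f) u p) (\<lambda>f p. u p)
      + 1/2 * ip_bdry N h w Jm (\<lambda>f p. Apen N mb Jm b tauH tauR f p * u p) (\<lambda>f p. u p)
      = (\<Sum>f\<in>UNIV. \<Sum>p\<in>facepts N f. - (b p * mv N (Dn D Dh Jm f) u p * Hexcept h w (fst f) p * (gam Jm f p * u p))
      + 1/2 * (Apen N mb Jm b tauH tauR f p * u p * Hexcept h w (fst f) p * (gam Jm f p * u p)))"
      unfolding ip_bdry_def by (simp add: sum.distrib sum_negf sum_distrib_left sum_subtractf)
    also have "\<dots> \<ge> (\<Sum>f\<in>UNIV. \<Sum>p\<in>facepts N f. - (Hfull h w p * W p / (2 * d)) - Z f p)"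
    proof (intro sum_mono)
      fix f and p :: "'d \<Rightarrow> nat" assume pf: "p \<in> facepts N f"
      show "- (Hfull h w p * W p / (2 * d)) - Z f p \<le> - (b p * mv N (Dn D Dh Jm f) u p * Hexcept h w (fst f) p * (gam Jm f p * u p))
      + 1/2 * (Apen N mb Jm b tauH tauR f p * u p * Hexcept h w (fst f) p * (gam Jm f p * u p))"
        using BQ[OF pf, of u] unfolding W_def Z_def Dl_def d_def by (simp add: mult_ac)
    qed
    also have "(\<Sum>f\<in>UNIV. \<Sum>p\<in>facepts N f. - (Hfull h w p * W p / (2 * d)) - Z f p)
       = - (\<Sum>f\<in>UNIV. \<Sum>p\<in>facepts N f. Hfull h w p * W p / (2 * d)) - (\<Sum>f\<in>UNIV. \<Sum>p\<in>facepts N f. Z f p)"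
      by (simp add: sum_subtractf sum_negf)
    finally show ?thesis .
  qed
  have a: "(\<Sum>f\<in>UNIV. \<Sum>p\<in>facepts N f. Hfull h w p * W p / (2 * d)) \<le> V / 2"
  proof -
    have "(\<Sum>f\<in>UNIV. \<Sum>p\<in>facepts N f. Hfull h w p * W p / (2 * d)) \<le> d * (\<Sum>p\<in>grid N. Hfull h w p * W p / (2 * d))"
      unfolding d_def
    proof (rule face_le)
      fix p :: "'d \<Rightarrow> nat" assume p: "p \<in> grid N"
      have "0 \<le> Hfull h w p" using Hfull_pos[OF p] by simp
      then show "0 \<le> Hfull h w p * W p / (2 * real CARD('d))" using W0[OF p] by simp
    qed
    also have "\<dots> = V / 2" unfolding V using d0 by (simp add: sum_divide_distrib[symmetric])
    finally show ?thesis .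
  qed
  have b: "(\<Sum>f\<in>UNIV. \<Sum>p\<in>facepts N f. Z f p) \<le> RRs / 2"
  proof -
    have "(\<Sum>f\<in>UNIV. \<Sum>p\<in>facepts N f. Z f p)
        = (\<Sum>j\<in>UNIV. (h * thetaR / 2) * (\<Sum>p\<in>grid N.
         (if p j = N - 1 then Hexcept h w j p * etamin N mb Jm b (j, True) j p * (Dl j p)\<^sup>2 else 0)
       + (if p j = 0 then Hexcept h w j p * etamin N mb Jm b (j, False) j p * (Dl j p)\<^sup>2 else 0)))"
      unfolding face_sum sum_distrib_left by (intro sum.cong refl) (auto simp: Z_def algebra_simps)
    also have "\<dots> \<le> (\<Sum>j\<in>UNIV. 1/2 * (\<Sum>p\<in>grid N. \<Sum>q\<in>grid N. u p * Rii N h w R j (eta Jm b j) p q * u q))"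
    proof (intro sum_mono)
      fix j
      show "(h * thetaR / 2) * (\<Sum>p\<in>grid N.
         (if p j = N - 1 then Hexcept h w j p * etamin N mb Jm b (j, True) j p * (Dl j p)\<^sup>2 else 0)
       + (if p j = 0 then Hexcept h w j p * etamin N mb Jm b (j, False) j p * (Dl j p)\<^sup>2 else 0))
        \<le> 1/2 * (\<Sum>p\<in>grid N. \<Sum>q\<in>grid N. u p * Rii N h w R j (eta Jm b j) p q * u q)"
        using RJ[of j u] unfolding Dl_def by simp
    qed
    also have "\<dots> = RRs / 2" unfolding RRs_def by (simp add: sum_divide_distrib[symmetric])
    finally show ?thesis .
  qed
  have "energy_D N h w D Dh R mb Jm a b tauH tauR u ud = 1/2 * KE + 1/2 * V + 1/2 * RRs
     + (- ip_bdry N h w Jm (\<lambda>f p. b p * mv N (Dn D Dh Jm f) u p) (\<lambda>f p. u p)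
      + 1/2 * ip_bdry N h w Jm (\<lambda>f p. Apen N mb Jm b tauH tauR f p * u p) (\<lambda>f p. u p))"
    unfolding energy_D_def energy_def KE_def V_def RRs_def by simp
  then show ?thesis using KE0 bd a b by linarith
qed

end


lemma DERIV_eqI: "(f has_real_derivative a) F \<Longrightarrow> a = b \<Longrightarrow> (f has_real_derivative b) F"
  by simp

lemma D_mv:
  assumes "\<forall>q\<in>grid N. ((\<lambda>t. u t q) has_real_derivative u' q) (at t)"
  shows "((\<lambda>t. mv N M (u t) p) has_real_derivative mv N M u' p) (at t)"
  unfolding mv_def by (intro DERIV_sum DERIV_cmult) (use assms in auto)

lemma D_Dx:
  assumes "\<forall>q\<in>grid N. ((\<lambda>t. u t q) has_real_derivative u' q) (at t)"
  shows "((\<lambda>t. Dx N D Jm i (u t) p) has_real_derivative Dx N D Jm i u' p) (at t)"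
  unfolding Dx_def by (intro DERIV_sum DERIV_cmult D_mv assms)

lemma D_prod3:
  assumes "(f has_real_derivative f') (at t)" "(g has_real_derivative g') (at t)"
  shows "((\<lambda>t. f t * c * (d * g t)) has_real_derivative f' * c * (d * g t) + f t * c * (d * g')) (at t)"
  by (rule DERIV_eqI[OF DERIV_mult[OF DERIV_cmult_right[OF assms(1), of c] DERIV_cmult[OF assms(2), of d]]])
     (simp add: algebra_simps)

lemma D_ipvol:
  assumes x: "\<forall>p\<in>grid N. ((\<lambda>t. x t p) has_real_derivative x' p) (at t)"
    and y: "\<forall>p\<in>grid N. ((\<lambda>t. y t p) has_real_derivative y' p) (at t)"
  shows "((\<lambda>t. ip_vol N h w Jm (x t) (y t)) has_real_derivative ip_vol N h w Jm x' (y t) + ip_vol N h w Jm (x t) y') (at t)"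
  unfolding ip_vol_def sum.distrib[symmetric]
  by (intro DERIV_sum D_prod3) (use x y in auto)

lemma D_ipbdry:
  assumes x: "\<forall>f. \<forall>p\<in>facepts N f. ((\<lambda>t. x t f p) has_real_derivative x' f p) (at t)"
    and y: "\<forall>f. \<forall>p\<in>facepts N f. ((\<lambda>t. y t f p) has_real_derivative y' f p) (at t)"
  shows "((\<lambda>t. ip_bdry N h w Jm (x t) (y t)) has_real_derivative ip_bdry N h w Jm x' (y t) + ip_bdry N h w Jm (x t) y') (at t)"
  unfolding ip_bdry_def sum.distrib[symmetric]
  by (intro DERIV_sum D_prod3) (use x y in auto)

lemma D_quad:
  fixes u :: "real \<Rightarrow> ('d::finite \<Rightarrow> nat) \<Rightarrow> real"
  assumes u: "\<forall>p\<in>grid N. ((\<lambda>t. u t p) has_real_derivative u' p) (at t)"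
  shows "((\<lambda>t. \<Sum>k\<in>K. \<Sum>p\<in>grid N. \<Sum>q\<in>grid N. u t p * M k p q * u t q) has_real_derivative
      (\<Sum>k\<in>K. \<Sum>p\<in>grid N. \<Sum>q\<in>grid N. u' p * M k p q * u t q + u t p * M k p q * u' q)) (at t)"
proof (intro DERIV_sum)
  fix k and p q :: "'d \<Rightarrow> nat" assume p: "p \<in> grid N" and q: "q \<in> grid N"
  show "((\<lambda>t. u t p * M k p q * u t q) has_real_derivative u' p * M k p q * u t q + u t p * M k p q * u' q) (at t)"
    by (rule DERIV_eqI[OF DERIV_mult[OF DERIV_cmult_right[of "\<lambda>t. u t p" "u' p" t UNIV "M k p q"] ]])
       (use u p q in \<open>auto simp: algebra_simps\<close>)
qed

context setting2 begin

lemma Rii_sym: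
  assumes p: "p \<in> grid N" and q: "q \<in> grid N" and c: "\<forall>x\<in>grid N. 0 \<le> c x"
  shows "Rii N h w R k c p q = Rii N h w R k c q p"
proof (cases "\<forall>j. j \<noteq> k \<longrightarrow> p j = q j")
  case True
  have T2: "\<forall>j. j \<noteq> k \<longrightarrow> q j = p j" using True by auto
  have He: "Hexcept h w k p = Hexcept h w k q" using True by (rule Hexcept_line)
  have lr: "line_restrict N k p c = line_restrict N k q c"
  proof -
    have pq: "p(k := j) = q(k := j)" for j using True by (auto simp: fun_eq_iff)
    show ?thesis unfolding line_restrict_def by (rule ext) (simp only: pq)
  qed
  have nn: "\<forall>j<N. 0 \<le> line_restrict N k p c j"
    using c grid_upd[OF p] by (auto simp: line_restrict_def)
  have "R (line_restrict N k p c) (p k) (q k) = R (line_restrict N k p c) (q k) (p k)"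
    using R_sym[OF nn] p q by (auto simp: grid_def)
  then show ?thesis unfolding Rii_def Dii_def using True T2 He lr by simp
next
  case False
  have F2: "\<not> (\<forall>j. j \<noteq> k \<longrightarrow> q j = p j)" using False by auto
  show ?thesis unfolding Rii_def Dii_def by (simp only: if_not_P[OF False] if_not_P[OF F2] mult_zero_right)
qed

lemma ipvol_comm: "ip_vol N h w Jm x y = ip_vol N h w Jm y x"
  unfolding ip_vol_def by (simp add: mult_ac)

lemma ipbdry_comm: "ip_bdry N h w Jm (\<lambda>f p. A f p * x p) (\<lambda>f p. y p) = ip_bdry N h w Jm (\<lambda>f p. A f p * y p) (\<lambda>f p. x p)"
  unfolding ip_bdry_def by (simp add: mult_ac)

lemma deriv_zero:
  fixes u :: "real \<Rightarrow> ('d \<Rightarrow> nat) \<Rightarrow> real"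
  assumes du: "\<forall>p\<in>grid N. ((\<lambda>t. u t p) has_real_derivative ud t p) (at t)"
    and dud: "\<forall>p\<in>grid N. ((\<lambda>t. ud t p) has_real_derivative udd t p) (at t)"
    and ode: "\<forall>p\<in>grid N. Jdet Jm p * a p * udd t p = rhs N h w D Dh Dxx mb Jm b tauH tauR (u t) p"
  shows "((\<lambda>t. energy_D N h w D Dh R mb Jm a b tauH tauR (u t) (ud t)) has_real_derivative 0) (at t)"
proof -
  let ?v = "ud t" and ?w = "u t"
  define KE' where "KE' = ip_vol N h w Jm (\<lambda>p. sqrt (a p) * udd t p) (\<lambda>p. sqrt (a p) * ud t p)
       + ip_vol N h w Jm (\<lambda>p. sqrt (a p) * ud t p) (\<lambda>p. sqrt (a p) * udd t p)"
  define V' where "V' = (\<Sum>i\<in>UNIV. ip_vol N h w Jm (\<lambda>p. sqrt (b p) * Dx N D Jm i ?v p) (\<lambda>p. sqrt (b p) * Dx N D Jm i ?w p)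
       + ip_vol N h w Jm (\<lambda>p. sqrt (b p) * Dx N D Jm i ?w p) (\<lambda>p. sqrt (b p) * Dx N D Jm i ?v p))"
  define R' where "R' = (\<Sum>k\<in>UNIV. \<Sum>p\<in>grid N. \<Sum>q\<in>grid N. ?v p * Rii N h w R k (eta Jm b k) p q * ?w q + ?w p * Rii N h w R k (eta Jm b k) p q * ?v q)"
  define B' where "B' = ip_bdry N h w Jm (\<lambda>f p. b p * mv N (Dn D Dh Jm f) ?v p) (\<lambda>f p. ?w p)
       + ip_bdry N h w Jm (\<lambda>f p. b p * mv N (Dn D Dh Jm f) ?w p) (\<lambda>f p. ?v p)"
  define A' where "A' = ip_bdry N h w Jm (\<lambda>f p. Apen N mb Jm b tauH tauR f p * ?v p) (\<lambda>f p. ?w p)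
       + ip_bdry N h w Jm (\<lambda>f p. Apen N mb Jm b tauH tauR f p * ?w p) (\<lambda>f p. ?v p)"
  have fg: "\<forall>f. \<forall>p\<in>facepts N f. p \<in> grid N" by (auto intro: facepts_grid)
  have dKE: "((\<lambda>t. ip_vol N h w Jm (\<lambda>p. sqrt (a p) * ud t p) (\<lambda>p. sqrt (a p) * ud t p)) has_real_derivative KE') (at t)"
    unfolding KE'_def by (intro D_ipvol) (use dud in \<open>auto intro: DERIV_cmult\<close>)
  have dDx: "\<forall>p\<in>grid N. ((\<lambda>t. sqrt (b p) * Dx N D Jm i (u t) p) has_real_derivative sqrt (b p) * Dx N D Jm i ?v p) (at t)" for i
    using D_Dx[OF du] by (auto intro: DERIV_cmult)
  have dV: "((\<lambda>t. \<Sum>i\<in>UNIV. ip_vol N h w Jm (\<lambda>p. sqrt (b p) * Dx N D Jm i (u t) p) (\<lambda>p. sqrt (b p) * Dx N D Jm i (u t) p)) has_real_derivative V') (at t)"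
    unfolding V'_def by (intro DERIV_sum D_ipvol dDx)
  have dR: "((\<lambda>t. \<Sum>k\<in>UNIV. \<Sum>p\<in>grid N. \<Sum>q\<in>grid N. u t p * Rii N h w R k (eta Jm b k) p q * u t q) has_real_derivative R') (at t)"
    unfolding R'_def by (rule D_quad[OF du])
  have dB: "((\<lambda>t. ip_bdry N h w Jm (\<lambda>f p. b p * mv N (Dn D Dh Jm f) (u t) p) (\<lambda>f p. u t p)) has_real_derivative B') (at t)"
    unfolding B'_def by (intro D_ipbdry) (use du fg in \<open>auto intro!: DERIV_cmult D_mv\<close>)
  have dA: "((\<lambda>t. ip_bdry N h w Jm (\<lambda>f p. Apen N mb Jm b tauH tauR f p * u t p) (\<lambda>f p. u t p)) has_real_derivative A') (at t)"
    unfolding A'_def by (intro D_ipbdry) (use du fg in \<open>auto intro!: DERIV_cmult\<close>)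
  have dE: "((\<lambda>t. energy_D N h w D Dh R mb Jm a b tauH tauR (u t) (ud t)) has_real_derivative
      1/2 * KE' + 1/2 * V' + 1/2 * R' - B' + 1/2 * A') (at t)"
    unfolding energy_D_def energy_def
    by (intro DERIV_add DERIV_diff DERIV_cmult dKE dV dR dB dA)
  have c0: "\<forall>x\<in>grid N. 0 \<le> eta Jm b k x" for k using eta_pos less_imp_le by blast
  have Rs: "(\<Sum>p\<in>grid N. \<Sum>q\<in>grid N. ?w p * Rii N h w R k (eta Jm b k) p q * ?v q)
      = (\<Sum>p\<in>grid N. \<Sum>q\<in>grid N. ?v p * Rii N h w R k (eta Jm b k) p q * ?w q)" for k
  proof -
    have "(\<Sum>p\<in>grid N. \<Sum>q\<in>grid N. ?w p * Rii N h w R k (eta Jm b k) p q * ?v q)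
        = (\<Sum>q\<in>grid N. \<Sum>p\<in>grid N. ?w p * Rii N h w R k (eta Jm b k) p q * ?v q)"
      by (rule sum.swap)
    also have "\<dots> = (\<Sum>q\<in>grid N. \<Sum>p\<in>grid N. ?v q * Rii N h w R k (eta Jm b k) q p * ?w p)"
      by (intro sum.cong refl) (simp add: Rii_sym[OF _ _ c0] mult_ac)
    finally show ?thesis .
  qed
  have R'2: "R' = 2 * (\<Sum>k\<in>UNIV. \<Sum>p\<in>grid N. \<Sum>q\<in>grid N. ?v p * Rii N h w R k (eta Jm b k) p q * ?w q)"
    unfolding R'_def by (simp add: sum.distrib Rs sum_distrib_left)
  have KE2: "KE' = 2 * (\<Sum>r\<in>grid N. ?v r * Hfull h w r * rhs N h w D Dh Dxx mb Jm b tauH tauR ?w r)"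
  proof -
    have "KE' = 2 * ip_vol N h w Jm (\<lambda>p. sqrt (a p) * ud t p) (\<lambda>p. sqrt (a p) * udd t p)"
      unfolding KE'_def by (simp add: ipvol_comm[of "\<lambda>p. sqrt (a p) * udd t p"])
    also have "ip_vol N h w Jm (\<lambda>p. sqrt (a p) * ud t p) (\<lambda>p. sqrt (a p) * udd t p)
        = (\<Sum>r\<in>grid N. ?v r * Hfull h w r * rhs N h w D Dh Dxx mb Jm b tauH tauR ?w r)"
      unfolding ip_vol_def
    proof (intro sum.cong refl)
      fix r :: "'d \<Rightarrow> nat" assume r: "r \<in> grid N"
      have "0 < a r" using a_pos r by blast
      then have "sqrt (a r) * sqrt (a r) = a r" by simp
      then have "sqrt (a r) * ud t r * Hfull h w r * (Jdet Jm r * (sqrt (a r) * udd t r))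
          = ud t r * Hfull h w r * (Jdet Jm r * a r * udd t r)"
        by (metis (no_types, lifting) mult.assoc mult.commute mult.left_commute)
      then show "sqrt (a r) * ud t r * Hfull h w r * (Jdet Jm r * (sqrt (a r) * udd t r))
          = ?v r * Hfull h w r * rhs N h w D Dh Dxx mb Jm b tauH tauR ?w r"
        using ode r by simp
    qed
    finally show ?thesis .
  qed
  have V2: "V' = 2 * (\<Sum>i\<in>UNIV. ip_vol N h w Jm (\<lambda>p. sqrt (b p) * Dx N D Jm i ?v p) (\<lambda>p. sqrt (b p) * Dx N D Jm i ?w p))"
    unfolding V'_def by (simp add: ipvol_comm[of "\<lambda>p. sqrt (b p) * Dx N D Jm _ ?w p"] sum.distrib sum_distrib_left)
  have A2: "A' = 2 * ip_bdry N h w Jm (\<lambda>f p. Apen N mb Jm b tauH tauR f p * ?w p) (\<lambda>f p. ?v p)"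
    unfolding A'_def by (simp add: ipbdry_comm[of "Apen N mb Jm b tauH tauR" "?v"])
  have "1/2 * KE' + 1/2 * V' + 1/2 * R' - B' + 1/2 * A' = 0"
    using MI[where u="u t" and v="ud t"] unfolding KE2 V2 R'2 A2 B'_def by (simp add: algebra_simps)
  then show ?thesis using dE by simp
qed

end

theorem theorem1:
  fixes N s mb :: nat
    and h thetaR tauH tauR :: real
    and w :: "nat \<Rightarrow> real"
    and D Dh :: "nat \<Rightarrow> nat \<Rightarrow> real"
    and Dxx R :: "(nat \<Rightarrow> real) \<Rightarrow> nat \<Rightarrow> nat \<Rightarrow> real"
    and Jm :: "('d::finite \<Rightarrow> nat) \<Rightarrow> real^'d^'d"
    and a b :: "('d \<Rightarrow> nat) \<Rightarrow> real"
  assumes sbp: "sbp_1d N h w s D Dh Dxx R"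
    and PR: "prop_PR N h D Dh R mb thetaR"
    and thetaR_pos: "0 < thetaR"
    and mb_pos: "1 \<le> mb"
    and N_mb: "N \<ge> 2 * mb"
    and h_def: "h = 1 / (real N - 1)"
    and J_pos: "\<forall>p\<in>grid N. 0 < det (Jm p)"
    and a_pos: "\<forall>p\<in>grid N. 0 < a p"
    and b_pos: "\<forall>p\<in>grid N. 0 < b p"
    and tauH: "tauH \<ge> real CARD('d) / (h * w 0)"
    and tauR: "tauR \<ge> 1 / (h * thetaR)"
  shows "(\<forall>u ud. 0 \<le> energy_D N h w D Dh R mb Jm a b tauH tauR u ud)
       \<and> (\<forall>(T :: real set) (u :: real \<Rightarrow> ('d \<Rightarrow> nat) \<Rightarrow> real) ud udd.
            open T \<longrightarrow>
            (\<forall>t\<in>T. \<forall>p\<in>grid N. ((\<lambda>t. u t p) has_real_derivative ud t p) (at t)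
                              \<and> ((\<lambda>t. ud t p) has_real_derivative udd t p) (at t)) \<longrightarrow>
            (\<forall>t\<in>T. \<forall>p\<in>grid N.
               Jdet Jm p * a p * udd t p = rhs N h w D Dh Dxx mb Jm b tauH tauR (u t) p) \<longrightarrow>
            (\<forall>t\<in>T. ((\<lambda>t. energy_D N h w D Dh R mb Jm a b tauH tauR (u t) (ud t))
                       has_real_derivative 0) (at t)))"
proof -
  interpret setting2 N s mb h thetaR tauH tauR w D Dh Dxx R Jm a b
    by unfold_locales (use assms in auto)
  show ?thesis
  proof (intro conjI allI impI ballI)
    fix u ud :: "('d \<Rightarrow> nat) \<Rightarrow> real"
    show "0 \<le> energy_D N h w D Dh R mb Jm a b tauH tauR u ud" by (rule ED_nonneg)
  next
    fix T :: "real set" and u :: "real \<Rightarrow> ('d \<Rightarrow> nat) \<Rightarrow> real" and ud udd t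
    assume h1: "\<forall>t\<in>T. \<forall>p\<in>grid N. ((\<lambda>t. u t p) has_real_derivative ud t p) (at t)
                              \<and> ((\<lambda>t. ud t p) has_real_derivative udd t p) (at t)"
      and h2: "\<forall>t\<in>T. \<forall>p\<in>grid N. Jdet Jm p * a p * udd t p = rhs N h w D Dh Dxx mb Jm b tauH tauR (u t) p"
      and t: "t \<in> T"
    show "((\<lambda>t. energy_D N h w D Dh R mb Jm a b tauH tauR (u t) (ud t)) has_real_derivative 0) (at t)"
      by (rule deriv_zero) (use h1 h2 t in auto)
  qed
qed


end
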